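(* Let $p\ge1$ and let $\mathbf X$ be a random variable with values in $\mathcal G^w_p(V)$ such that $\mathbb E|\langle\mathbf X_{0,T},e_\sigma\rangle|<\infty$ for all $\sigma\in[d]^*$. Then for every $k\ge1$ and nonempty words $\tau_1,\dots,\tau_k$, with $\boldsymbol\tau=(\tau_1,\dots,\tau_k)$, $$\langle\kappa_{\mathbf X},e_{\tau_1}\sqcup\cdots\sqcup e_{\tau_k}\rangle=\sum_{\mathbf a\in\mathrm{Orp}(\boldsymbol\tau)}\mathfrak d(\mathbf a)\,\kappa_{\mathbf X}(\mathbf a).$$
   Context: Let $V=\mathbb R^d$ with basis $e_1,\dots,e_d$; $[n]=\{1,\dots,n\}$; $[d]^*=\bigcup_{m\ge0}[d]^m$ words, $e_\tau=e_{i_1}\otimes\cdots\otimes e_{i_m}$, $e_{()}=1$. $T(V)=\bigoplus_mV^{\otimes m}$, $T((V))=\prod_mV^{\otimes m}$ (algebra under $\otimes$), pairing $\langle s,t\rangle=\sum_\tau s_\tau t_\tau$; $\log y=\sum_{n\ge1}\frac{(-1)^{n-1}}{n}(y-1)^{\otimes n}$ for $\langle y,1\rangle=1$. Shuffle $\sqcup$ on $T(V)$: bilinear extension of $e_{\tau_1}\sqcup e_{\tau_2}=\sum_\sigma e_\sigma$ over interleavings counted with multiplicity. Weakly geometric $p$-rough paths: maps $\mathbf x:\{0\le s\le t\le T\}\to T((V))$ with (i) $\langle\mathbf x_{s,t},1\rangle=1$, $\langle\mathbf x_{s,t},f\sqcup g\rangle=\langle\mathbf x_{s,t},f\rangle\langle\mathbf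 x_{s,t},g\rangle$; (ii) $\mathbf x_{s,t}\otimes\mathbf x_{t,u}=\mathbf x_{s,u}$; (iii) $\max_{1\le m\le p}\sup_D(\sum_i|\pi_m\mathbf x_{t_i,t_{i+1}}|^{p/m})^{1/p}<\infty$; the set is $\mathcal G^w_p(V)$. $\mu_{\mathbf X}=\mathbb E[\mathbf X_{0,T}]$, $\kappa_{\mathbf X}=\log\mu_{\mathbf X}$. Partitions of a finite poset $P$: $\mathcal P(P)$, refinement order, $|\mathbf a|$ number of blocks, $\mathbf a\cap C=\{B\cap C\}\setminus\{\emptyset\}$. $\mathrm{Orp}(P)=\{\ker f: f:P\to\mathbb N\text{ order-preserving}\}$ ($\ker f$ = nonempty fibres); $\mathbf a!=\#\{f:P\to[|\mathbf a|]\text{ order-preserving}:\ker f=\mathbf a\}$; $\mathcal A(\mathbf a)=\{\mathbf b\in\mathrm{Orp}(P):\mathbf b\ge\mathbf a,\ \mathbf b\cap C=\mathbf a\cap C\ \forall\text{ chains }C\subseteq P\}$; $\mathfrak d(\mathbf a)=\sum_{\mathbf b\in\mathcal A(\mathbf a)}(-1)^{|\mathbf b|-1}\mathbf b!/|\mathbf b|$. Word poset: $P_{\boldsymbol\tau}=\{(j,p):j\in[k],p\in[|\tau_j|]\}$ with $(j,p)\le(j',p')$ iff $j=j'$, $p\le p'$ (positions distinct even if letters repeat); $\mathrm{Orp}(\boldsymbol\tau)=\mathrm{Orp}(P_{\boldsymbol\tau})$. For block $B$, $B^j=B\cap(\{j\}\times[|\tau_j|])$, and $e_{B^j}=e_{\tau_j(p_1)}\otimes\cdots\otimes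 e_{\tau_j(p_r)}$ for positions $p_1<\dots<p_r$ of $B^j$. Generalised cumulant: $\kappa_{\mathbf X}(\mathbf a)=\prod_{B\in\mathbf a}\kappa(\langle\mathbf X_{0,T},e_{B^j}\rangle: B^j\ne\emptyset)$, with $\kappa(Y_1,\dots,Y_r)=\sum_{\pi\in\mathcal P([r])}(-1)^{|\pi|-1}(|\pi|-1)!\prod_{A\in\pi}\mathbb E\prod_{i\in A}Y_i$ the classical joint cumulant. *)

theory Defs
  imports "HOL-Probability.Probability" "HOL-Library.Multiset" "HOL-Library.FuncSet"
begin

text \<open>Letters of V = R^d are 1..d; a word is a nat list with letters in {1..d}.
  An element of T((V)) is represented by its coordinate function on words
  (vanishing off words over [d]); an element of T(V) additionally has finite support.\<close>

definition is_word :: "nat \<Rightarrow> nat list \<Rightarrow> bool" where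
  "is_word d \<tau> \<longleftrightarrow> set \<tau> \<subseteq> {1..d}"

definition words_len :: "nat \<Rightarrow> nat \<Rightarrow> nat list set" where
  "words_len d m = {\<tau>. is_word d \<tau> \<and> length \<tau> = m}"

definition tsupp :: "(nat list \<Rightarrow> real) \<Rightarrow> nat list set" where
  "tsupp f = {\<tau>. f \<tau> \<noteq> 0}"

definition is_series :: "nat \<Rightarrow> (nat list \<Rightarrow> real) \<Rightarrow> bool" where
  "is_series d x \<longleftrightarrow> (\<forall>\<tau>. \<not> is_word d \<tau> \<longrightarrow> x \<tau> = 0)"

definition is_poly :: "nat \<Rightarrow> (nat list \<Rightarrow> real) \<Rightarrow> bool" where
  "is_poly d f \<longleftrightarrow> is_series d f \<and> finite (tsupp f)"

definition ew :: "nat list \<Rightarrow> nat list \<Rightarrow> real" where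
  "ew \<tau> = (\<lambda>\<sigma>. if \<sigma> = \<tau> then 1 else 0)"

definition tpair :: "(nat list \<Rightarrow> real) \<Rightarrow> (nat list \<Rightarrow> real) \<Rightarrow> real" where
  "tpair s t = (\<Sum>\<tau>\<in>tsupp t. s \<tau> * t \<tau>)"

definition tmul :: "(nat list \<Rightarrow> real) \<Rightarrow> (nat list \<Rightarrow> real) \<Rightarrow> nat list \<Rightarrow> real" where
  "tmul s t = (\<lambda>\<tau>. \<Sum>i\<le>length \<tau>. s (take i \<tau>) * t (drop i \<tau>))"

primrec tpow :: "(nat list \<Rightarrow> real) \<Rightarrow> nat \<Rightarrow> nat list \<Rightarrow> real" where
  "tpow s 0 = ew []"
| "tpow s (Suc n) = tmul s (tpow s n)"

text \<open>log y = sum_{n>=1} (-1)^(n-1)/n (y-1)^n, coordinatewise (each coordinate series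
  is eventually zero when <y,1> = 1).\<close>
definition tlog :: "(nat list \<Rightarrow> real) \<Rightarrow> nat list \<Rightarrow> real" where
  "tlog y = (\<lambda>\<tau>. \<Sum>n. (-1) ^ n / real (Suc n) * tpow (\<lambda>\<sigma>. y \<sigma> - ew [] \<sigma>) (Suc n) \<tau>)"

fun shuf_w :: "nat list \<Rightarrow> nat list \<Rightarrow> nat list multiset" where
  "shuf_w [] ys = {#ys#}"
| "shuf_w xs [] = {#xs#}"
| "shuf_w (x # xs) (y # ys) =
     image_mset (Cons x) (shuf_w xs (y # ys)) + image_mset (Cons y) (shuf_w (x # xs) ys)"

definition tshuffle :: "(nat list \<Rightarrow> real) \<Rightarrow> (nat list \<Rightarrow> real) \<Rightarrow> nat list \<Rightarrow> real" where
  "tshuffle f g = (\<lambda>\<sigma>. \<Sum>u\<in>tsupp f. \<Sum>v\<in>tsupp g. f u * g v * real (count (shuf_w u v) \<sigma>))"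

definition level_norm :: "nat \<Rightarrow> nat \<Rightarrow> (nat list \<Rightarrow> real) \<Rightarrow> real" where
  "level_norm d m x = sqrt (\<Sum>\<tau>\<in>words_len d m. (x \<tau>)\<^sup>2)"

definition wg_rough_paths ::
  "nat \<Rightarrow> real \<Rightarrow> real \<Rightarrow> (real \<times> real \<Rightarrow> nat list \<Rightarrow> real) set" where
  "wg_rough_paths d p T = {x.
     (\<forall>s t. 0 \<le> s \<and> s \<le> t \<and> t \<le> T \<longrightarrow>
        is_series d (x (s, t)) \<and> x (s, t) [] = 1 \<and>
        (\<forall>f g. is_poly d f \<and> is_poly d g \<longrightarrow>
           tpair (x (s, t)) (tshuffle f g) = tpair (x (s, t)) f * tpair (x (s, t)) g)) \<and>
     (\<forall>s t u. 0 \<le> s \<and> s \<le> t \<and> t \<le> u \<and> u \<le> T \<longrightarrow> tmul (x (s, t)) (x (t, u)) = x (s, u)) \<and>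
     (\<forall>m::nat. 1 \<le> m \<and> real m \<le> p \<longrightarrow>
        (\<exists>C. \<forall>(n::nat) (ti::nat \<Rightarrow> real).
            ti 0 = 0 \<and> ti n = T \<and> (\<forall>i<n. ti i < ti (Suc i)) \<longrightarrow>
            (\<Sum>i<n. level_norm d m (x (ti i, ti (Suc i))) powr (p / real m)) powr (1 / p) \<le> C))}"

definition order_pres :: "'a set \<Rightarrow> ('a \<Rightarrow> 'a \<Rightarrow> bool) \<Rightarrow> ('a \<Rightarrow> nat) \<Rightarrow> bool" where
  "order_pres P le f \<longleftrightarrow> (\<forall>x\<in>P. \<forall>y\<in>P. le x y \<longrightarrow> f x \<le> f y)"

definition kern :: "'a set \<Rightarrow> ('a \<Rightarrow> nat) \<Rightarrow> 'a set set" where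
  "kern P f = (\<lambda>n. {x\<in>P. f x = n}) ` (f ` P)"

definition Orp :: "'a set \<Rightarrow> ('a \<Rightarrow> 'a \<Rightarrow> bool) \<Rightarrow> 'a set set set" where
  "Orp P le = {kern P f | f. order_pres P le f}"

definition part_fact :: "'a set \<Rightarrow> ('a \<Rightarrow> 'a \<Rightarrow> bool) \<Rightarrow> 'a set set \<Rightarrow> nat" where
  "part_fact P le a = card {f \<in> P \<rightarrow>\<^sub>E {1..card a}. order_pres P le f \<and> kern P f = a}"

definition refines :: "'a set set \<Rightarrow> 'a set set \<Rightarrow> bool" where
  "refines a b \<longleftrightarrow> (\<forall>A\<in>a. \<exists>B\<in>b. A \<subseteq> B)"

definition is_chain :: "'a set \<Rightarrow> ('a \<Rightarrow> 'a \<Rightarrow> bool) \<Rightarrow> 'a set \<Rightarrow> bool" where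
  "is_chain P le C \<longleftrightarrow> C \<subseteq> P \<and> (\<forall>x\<in>C. \<forall>y\<in>C. le x y \<or> le y x)"

definition restr_part :: "'a set set \<Rightarrow> 'a set \<Rightarrow> 'a set set" where
  "restr_part a C = (\<lambda>B. B \<inter> C) ` a - {{}}"

definition Aset :: "'a set \<Rightarrow> ('a \<Rightarrow> 'a \<Rightarrow> bool) \<Rightarrow> 'a set set \<Rightarrow> 'a set set set" where
  "Aset P le a = {b \<in> Orp P le. refines a b \<and>
       (\<forall>C. is_chain P le C \<longrightarrow> restr_part b C = restr_part a C)}"

definition dcoef :: "'a set \<Rightarrow> ('a \<Rightarrow> 'a \<Rightarrow> bool) \<Rightarrow> 'a set set \<Rightarrow> real" where
  "dcoef P le a = (\<Sum>b\<in>Aset P le a.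
       (-1) ^ (card b - 1) * real (part_fact P le b) / real (card b))"

section \<open>Word poset (0-based indices: word j < k, position q < |tau_j|)\<close>

definition word_poset :: "nat list list \<Rightarrow> (nat \<times> nat) set" where
  "word_poset ts = {(j, q). j < length ts \<and> q < length (ts ! j)}"

definition word_le :: "nat \<times> nat \<Rightarrow> nat \<times> nat \<Rightarrow> bool" where
  "word_le x y \<longleftrightarrow> fst x = fst y \<and> snd x \<le> snd y"

definition subword :: "nat list list \<Rightarrow> (nat \<times> nat) set \<Rightarrow> nat \<Rightarrow> nat list" where
  "subword ts B j = map (\<lambda>q. ts ! j ! q) (sorted_list_of_set {q. (j, q) \<in> B})"

definition joint_cumulant :: "'w measure \<Rightarrow> 'i set \<Rightarrow> ('i \<Rightarrow> 'w \<Rightarrow> real) \<Rightarrow> real" where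
  "joint_cumulant M J Y = (\<Sum>\<pi>\<in>{\<pi>. partition_on J \<pi>}.
      (-1) ^ (card \<pi> - 1) * fact (card \<pi> - 1) *
      (\<Prod>A\<in>\<pi>. integral\<^sup>L M (\<lambda>\<omega>. \<Prod>i\<in>A. Y i \<omega>)))"

definition exp_sig :: "'w measure \<Rightarrow> ('w \<Rightarrow> real \<times> real \<Rightarrow> nat list \<Rightarrow> real) \<Rightarrow> real \<Rightarrow> nat list \<Rightarrow> real" where
  "exp_sig M X T = (\<lambda>\<tau>. integral\<^sup>L M (\<lambda>\<omega>. X \<omega> (0, T) \<tau>))"

definition sig_cumulant :: "'w measure \<Rightarrow> ('w \<Rightarrow> real \<times> real \<Rightarrow> nat list \<Rightarrow> real) \<Rightarrow> real \<Rightarrow> nat list \<Rightarrow> real" where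
  "sig_cumulant M X T = tlog (exp_sig M X T)"

definition gen_cumulant :: "'w measure \<Rightarrow> ('w \<Rightarrow> real \<times> real \<Rightarrow> nat list \<Rightarrow> real) \<Rightarrow> real
     \<Rightarrow> nat list list \<Rightarrow> (nat \<times> nat) set set \<Rightarrow> real" where
  "gen_cumulant M X T ts a = (\<Prod>B\<in>a.
      joint_cumulant M {j. j < length ts \<and> {q. (j, q) \<in> B} \<noteq> {}}
        (\<lambda>j \<omega>. X \<omega> (0, T) (subword ts B j)))"

end

theory Submission
  imports Defs
begin

fun sh :: "'a list \<Rightarrow> 'a list \<Rightarrow> 'a list multiset" where
  "sh [] ys = {#ys#}"
| "sh xs [] = {#xs#}"
| "sh (x # xs) (y # ys) =
     image_mset (Cons x) (sh xs (y # ys)) + image_mset (Cons y) (sh (x # xs) ys)"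

lemma shuf_w_sh: "shuf_w u v = sh u v"
  by (induction u v rule: shuf_w.induct) auto


fun shufs :: "'a list list \<Rightarrow> 'a list multiset" where
  "shufs [] = {#[]#}"
| "shufs (w # ws) = sum_mset (image_mset (sh w) (shufs ws))"

lemma sum_count_mset:
  fixes f :: "'a \<Rightarrow> real"
  assumes "finite S" "set_mset N \<subseteq> S"
  shows "(\<Sum>v\<in>S. real (count N v) * f v) = (\<Sum>v\<in>#N. f v)"
  using assms(2)
proof (induction N)
  case empty then show ?case by simp
next
  case (add x N)
  have "(\<Sum>v\<in>S. real (count (add_mset x N) v) * f v)
      = (\<Sum>v\<in>S. real (count N v) * f v) + (\<Sum>v\<in>S. (if v = x then f v else 0))"
    by (auto simp: sum.distrib[symmetric] algebra_simps intro!: sum.cong)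
  also have "(\<Sum>v\<in>S. (if v = x then f v else 0)) = f x"
    using add.prems assms(1) by (simp add: sum.delta)
  finally show ?case using add by simp
qed

lemma count_sum_mset_image:
  "count (sum_mset (image_mset g N)) s = (\<Sum>v\<in>#N. count (g v) s)"
  by (induction N) auto

lemma tsupp_count: "tsupp (\<lambda>\<sigma>. real (count N \<sigma>)) = set_mset N"
  by (auto simp: tsupp_def)

lemma tpair_count: "tpair x (\<lambda>\<sigma>. real (count N \<sigma>)) = (\<Sum>\<sigma>\<in>#N. x \<sigma>)"
proof -
  have "tpair x (\<lambda>\<sigma>. real (count N \<sigma>)) = (\<Sum>\<sigma>\<in>set_mset N. real (count N \<sigma>) * x \<sigma>)"
    unfolding tpair_def tsupp_count by (simp add: mult.commute)
  also have "\<dots> = (\<Sum>\<sigma>\<in>#N. x \<sigma>)" by (rule sum_count_mset) auto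
  finally show ?thesis .
qed

lemma tsupp_ew: "tsupp (ew w) = {w}"
  by (auto simp: tsupp_def ew_def)

lemma foldr_shuffle_count:
  "foldr tshuffle (map ew ws) (ew []) = (\<lambda>\<sigma>. real (count (shufs ws) \<sigma>))"
proof (induction ws)
  case Nil
  then show ?case by (auto simp: ew_def)
next
  case (Cons w ws)
  show ?case
  proof
    fix s
    have "foldr tshuffle (map ew (w # ws)) (ew []) s
        = tshuffle (ew w) (\<lambda>\<sigma>. real (count (shufs ws) \<sigma>)) s" using Cons by simp
    also have "\<dots> = (\<Sum>v\<in>set_mset (shufs ws). real (count (shufs ws) v) * real (count (sh w v) s))"
      unfolding tshuffle_def tsupp_ew tsupp_count by (simp add: ew_def shuf_w_sh)
    also have "\<dots> = (\<Sum>v\<in>#shufs ws. real (count (sh w v) s))"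
      by (rule sum_count_mset) auto
    also have "\<dots> = real (count (shufs (w # ws)) s)"
      by (simp add: count_sum_mset_image multiset.map_comp comp_def)
    finally show "foldr tshuffle (map ew (w # ws)) (ew []) s = real (count (shufs (w # ws)) s)" .
  qed
qed

lemma shuf_w_map: "sh (map g u) (map g v) = image_mset (map g) (sh u v)"
  by (induction u v rule: sh.induct) (auto simp: multiset.map_comp comp_def)

lemma image_mset_sum_mset: "image_mset f (sum_mset M) = sum_mset (image_mset (image_mset f) M)"
  by (induction M) auto

lemma shufs_map: "shufs (map (map g) ls) = image_mset (map g) (shufs ls)"
proof (induction ls)
  case Nil then show ?case by simp
next
  case (Cons w ls)
  have "shufs (map (map g) (w # ls)) = sum_mset (image_mset (sh (map g w)) (image_mset (map g) (shufs ls)))"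
    using Cons by simp
  also have "\<dots> = sum_mset (image_mset (\<lambda>v. image_mset (map g) (sh w v)) (shufs ls))"
    by (simp add: multiset.map_comp comp_def shuf_w_map)
  also have "\<dots> = image_mset (map g) (shufs (w # ls))"
    by (simp add: image_mset_sum_mset multiset.map_comp comp_def)
  finally show ?case .
qed

definition R :: "nat \<times> nat \<Rightarrow> nat \<times> nat \<Rightarrow> bool" where
  "R x y \<longleftrightarrow> x \<noteq> y \<and> (fst x = fst y \<longrightarrow> snd x < snd y)"

definition LE :: "(nat \<times> nat) set \<Rightarrow> (nat \<times> nat) list set" where
  "LE Q = {L. set L = Q \<and> sorted_wrt R L}"

lemma sortedR_distinct: "sorted_wrt R L \<Longrightarrow> distinct L"
  by (induction L) (auto simp: R_def)

lemma finite_LE: assumes "finite Q" shows "finite (LE Q)"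
proof (rule finite_subset)
  show "LE Q \<subseteq> {xs. set xs \<subseteq> Q \<and> distinct xs}"
    unfolding LE_def using sortedR_distinct by blast
  show "finite {xs. set xs \<subseteq> Q \<and> distinct xs}" using assms by (rule finite_subset_distinct)
qed

lemma chain_eq:
  assumes "\<forall>x\<in>set L1. fst x = j" "\<forall>x\<in>set L2. fst x = j" "sorted_wrt R L1" "sorted_wrt R L2"
    "set L1 = set L2"
  shows "L1 = L2"
proof -
  have s: "sorted (map snd L) \<and> distinct (map snd L)" if "\<forall>x\<in>set L. fst x = j" "sorted_wrt R L" for L
  proof -
    have "sorted_wrt (\<lambda>x y. snd x < snd y) L"
      using that(2) by (rule sorted_wrt_mono_rel[rotated]) (use that(1) in \<open>auto simp: R_def\<close>)
    then have "sorted_wrt (<) (map snd L)" by (simp add: sorted_wrt_map)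
    then show ?thesis by (simp only: strict_sorted_iff)
  qed
  have m: "map snd L1 = map snd L2"
    using s[OF assms(1,3)] s[OF assms(2,4)] assms(5)
    by (intro sorted_distinct_set_unique) (simp_all add: list.set_map)
  have r: "map (\<lambda>q. (j, q)) (map snd L) = L" if "\<forall>x\<in>set L. fst x = j" for L
    using that by (induction L) auto
  have "L1 = map (\<lambda>q. (j, q)) (map snd L1)" using r[OF assms(1)] by simp
  also have "\<dots> = map (\<lambda>q. (j, q)) (map snd L2)" using m by simp
  also have "\<dots> = L2" using r[OF assms(2)] .
  finally show ?thesis .
qed

definition Sset :: "nat \<Rightarrow> (nat \<times> nat) list \<Rightarrow> (nat \<times> nat) list \<Rightarrow> (nat \<times> nat) list set" where
  "Sset j u v = {L. set L = set u \<union> set v \<and> sorted_wrt R L \<and> filter (\<lambda>x. fst x \<noteq> j) L = v}"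

lemma finite_Sset: "finite (Sset j u v)"
proof (rule finite_subset)
  show "Sset j u v \<subseteq> {xs. set xs \<subseteq> set u \<union> set v \<and> distinct xs}"
    unfolding Sset_def using sortedR_distinct by blast
  show "finite {xs. set xs \<subseteq> set u \<union> set v \<and> distinct xs}" by (rule finite_subset_distinct) simp
qed

lemma sh_char:
  assumes "sorted_wrt R u" "sorted_wrt R v" "\<forall>x\<in>set u. fst x = j" "\<forall>y\<in>set v. fst y \<noteq> j"
  shows "sh u v = mset_set (Sset j u v)"
  using assms
proof (induction u v rule: sh.induct)
  case (1 v)
  have "Sset j [] v = {v}"
  proof -
    { fix L assume L: "L \<in> Sset j [] v"
      then have sL: "set L = set v" and fL: "filter (\<lambda>x. fst x \<noteq> j) L = v"
        by (simp_all add: Sset_def)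
      have "filter (\<lambda>x. fst x \<noteq> j) L = L" using sL "1.prems"(4) by (simp add: filter_id_conv)
      with fL have "L = v" by simp }
    moreover have "v \<in> Sset j [] v" using "1.prems"(2,4) by (simp add: Sset_def filter_id_conv)
    ultimately show ?thesis by blast
  qed
  then show ?case by simp
next
  case (2 x xs)
  have "Sset j (x # xs) [] = {x # xs}"
  proof -
    { fix L assume L: "L \<in> Sset j (x # xs) []"
      then have sL: "set L = set (x # xs)" and soL: "sorted_wrt R L" by (simp_all add: Sset_def)
      have "L = x # xs"
        by (rule chain_eq[of _ j]) (use sL soL "2.prems"(1,3) in auto) }
    moreover have "x # xs \<in> Sset j (x # xs) []" using "2.prems"(1,3) by (simp add: Sset_def)
    ultimately show ?thesis by blast
  qed
  then show ?case by simp
next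
  case (3 x xs y ys)
  have IH1: "sh xs (y # ys) = mset_set (Sset j xs (y # ys))"
    by (rule "3.IH"(1)) (use "3.prems" in auto)
  have IH2: "sh (x # xs) ys = mset_set (Sset j (x # xs) ys)"
    by (rule "3.IH"(2)) (use "3.prems" in auto)
  have xy: "x \<noteq> y" using "3.prems"(3,4) by auto
  have dx: "x \<notin> set xs" "y \<notin> set ys" using "3.prems"(1,2) by (auto simp: R_def)
  have Rx: "\<And>z. z \<in> set xs \<Longrightarrow> R x z" using "3.prems"(1) by simp
  have Ry: "\<And>z. z \<in> set ys \<Longrightarrow> R y z" using "3.prems"(2) by simp
  have fu: "\<And>z. z \<in> set (x # xs) \<Longrightarrow> fst z = j" using "3.prems"(3) by blast
  have fv: "\<And>z. z \<in> set (y # ys) \<Longrightarrow> fst z \<noteq> j" using "3.prems"(4) by blast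
  have Ruv: "R a b" "R b a" if "a \<in> set (x # xs)" "b \<in> set (y # ys)" for a b
    using fu[OF that(1)] fv[OF that(2)] unfolding R_def by auto
  have eq: "Sset j (x # xs) (y # ys) = Cons x ` Sset j xs (y # ys) \<union> Cons y ` Sset j (x # xs) ys"
  proof (intro equalityI subsetI)
    fix L assume L: "L \<in> Sset j (x # xs) (y # ys)"
    then have sL: "sorted_wrt R L" and setL: "set L = set (x # xs) \<union> set (y # ys)"
      and fL: "filter (\<lambda>x. fst x \<noteq> j) L = y # ys" unfolding Sset_def by blast+
    obtain z L' where zL: "L = z # L'" using setL by (cases L) auto
    have zn: "z \<notin> set L'" using sortedR_distinct[OF sL] zL by simp
    have sL': "set L' = set L - {z}" using zL zn by auto
    have soL': "sorted_wrt R L'" using sL zL by simp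
    have Rz: "\<And>w. w \<in> set L' \<Longrightarrow> R z w" using sL zL by simp
    show "L \<in> Cons x ` Sset j xs (y # ys) \<union> Cons y ` Sset j (x # xs) ys"
    proof (cases "fst z = j")
      case True
      have "z \<in> set L" using zL by simp
      then have "z \<in> set (x # xs)" using setL fv True by blast
      have "z = x"
      proof (rule ccontr)
        assume "z \<noteq> x"
        then have "z \<in> set xs" using \<open>z \<in> set (x # xs)\<close> by simp
        then have "R x z" by (rule Rx)
        moreover have "x \<in> set L'" using setL sL' \<open>z \<noteq> x\<close> by simp
        then have "R z x" by (rule Rz)
        ultimately show False using True fu[of x] fu[of z] unfolding R_def by auto
      qed
      have "x \<notin> set (y # ys)" using fu[of x] fv[of x] by auto
      then have "set L' = set xs \<union> set (y # ys)"
        using setL sL' dx \<open>z = x\<close> by auto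
      moreover have "filter (\<lambda>x. fst x \<noteq> j) L' = y # ys" using fL zL True by simp
      ultimately have "L' \<in> Sset j xs (y # ys)" using soL' unfolding Sset_def by blast
      then show ?thesis using zL \<open>z = x\<close> by blast
    next
      case False
      then have "z = y" and fL': "filter (\<lambda>x. fst x \<noteq> j) L' = ys" using fL zL by simp_all
      have "y \<notin> set (x # xs)" using fu[of y] fv[of y] by auto
      then have "set L' = set (x # xs) \<union> set ys"
        using setL sL' dx \<open>z = y\<close> by auto
      then have "L' \<in> Sset j (x # xs) ys" using fL' soL' unfolding Sset_def by blast
      then show ?thesis using zL \<open>z = y\<close> by blast
    qed
  next
    fix L assume "L \<in> Cons x ` Sset j xs (y # ys) \<union> Cons y ` Sset j (x # xs) ys"
    then show "L \<in> Sset j (x # xs) (y # ys)"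
    proof
      assume "L \<in> Cons x ` Sset j xs (y # ys)"
      then obtain L' where L': "L = x # L'" "L' \<in> Sset j xs (y # ys)" by blast
      have sL': "set L' = set xs \<union> set (y # ys)" and soL': "sorted_wrt R L'"
        and fL': "filter (\<lambda>x. fst x \<noteq> j) L' = y # ys" using L'(2) unfolding Sset_def by blast+
      have "\<forall>z\<in>set L'. R x z"
      proof
        fix z assume "z \<in> set L'"
        then have "z \<in> set xs \<or> z \<in> set (y # ys)" using sL' by blast
        then show "R x z"
        proof
          assume "z \<in> set xs" then show ?thesis by (rule Rx)
        next
          assume "z \<in> set (y # ys)" then show ?thesis by (intro Ruv(1)) simp_all
        qed
      qed
      moreover have "set L = set (x # xs) \<union> set (y # ys)" using L'(1) sL' by auto
      moreover have "filter (\<lambda>x. fst x \<noteq> j) L = y # ys" using L'(1) fL' fu[of x] by simp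
      ultimately show ?thesis using L'(1) soL' unfolding Sset_def by simp
    next
      assume "L \<in> Cons y ` Sset j (x # xs) ys"
      then obtain L' where L': "L = y # L'" "L' \<in> Sset j (x # xs) ys" by blast
      have sL': "set L' = set (x # xs) \<union> set ys" and soL': "sorted_wrt R L'"
        and fL': "filter (\<lambda>x. fst x \<noteq> j) L' = ys" using L'(2) unfolding Sset_def by blast+
      have "\<forall>z\<in>set L'. R y z"
      proof
        fix z assume "z \<in> set L'"
        then have "z \<in> set (x # xs) \<or> z \<in> set ys" using sL' by blast
        then show "R y z"
        proof
          assume "z \<in> set (x # xs)" then show ?thesis by (intro Ruv(2)) simp_all
        next
          assume "z \<in> set ys" then show ?thesis by (rule Ry)
        qed
      qed
      moreover have "set L = set (x # xs) \<union> set (y # ys)" using L'(1) sL' by auto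
      moreover have "filter (\<lambda>x. fst x \<noteq> j) L = y # ys" using L'(1) fL' fv[of y] by simp
      ultimately show ?thesis using L'(1) soL' unfolding Sset_def by simp
    qed
  qed
  have disj: "Cons x ` Sset j xs (y # ys) \<inter> Cons y ` Sset j (x # xs) ys = {}" using xy by auto
  have "mset_set (Sset j (x # xs) (y # ys))
      = mset_set (Cons x ` Sset j xs (y # ys)) + mset_set (Cons y ` Sset j (x # xs) ys)"
    unfolding eq by (rule mset_set_Union) (use disj finite_Sset in auto)
  also have "\<dots> = image_mset (Cons x) (mset_set (Sset j xs (y # ys)))
      + image_mset (Cons y) (mset_set (Sset j (x # xs) ys))"
    by (simp add: image_mset_mset_set)
  also have "\<dots> = sh (x # xs) (y # ys)" by (simp only: IH1 IH2 sh.simps)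
  finally show ?case by simp
qed

definition pos :: "nat \<Rightarrow> (nat \<times> nat) set \<Rightarrow> (nat \<times> nat) list" where
  "pos j Q = map (Pair j) (sorted_list_of_set {q. (j, q) \<in> Q})"

lemma finite_fib: "finite Q \<Longrightarrow> finite {q. (j, q) \<in> Q}"
  by (rule finite_subset[of _ "snd ` Q"]) force+

lemma set_pos: "finite Q \<Longrightarrow> set (pos j Q) = {x \<in> Q. fst x = j}"
  unfolding pos_def using finite_fib[of Q j] by auto

lemma sorted_pos: "sorted_wrt R (pos j Q)"
proof -
  have "sorted_wrt (<) (sorted_list_of_set {q. (j, q) \<in> Q})"
    by (simp add: strict_sorted_iff)
  then show ?thesis unfolding pos_def sorted_wrt_map
    by (rule sorted_wrt_mono_rel[rotated]) (auto simp: R_def)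
qed

lemma mset_set_UN:
  assumes "finite I" "\<And>i. i \<in> I \<Longrightarrow> finite (A i)"
    "\<And>i k. i \<in> I \<Longrightarrow> k \<in> I \<Longrightarrow> i \<noteq> k \<Longrightarrow> A i \<inter> A k = {}"
  shows "mset_set (\<Union>i\<in>I. A i) = (\<Sum>i\<in>I. mset_set (A i))"
  using assms
proof (induction I rule: finite_induct)
  case empty then show ?case by simp
next
  case (insert i I)
  have "mset_set (\<Union>k\<in>insert i I. A k) = mset_set (A i \<union> (\<Union>k\<in>I. A k))" by simp
  also have "\<dots> = mset_set (A i) + mset_set (\<Union>k\<in>I. A k)"
    by (rule mset_set_Union) (use insert in auto)
  also have "mset_set (\<Union>k\<in>I. A k) = (\<Sum>k\<in>I. mset_set (A k))"
    by (rule insert.IH) (use insert.prems in auto)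
  finally show ?case using insert by simp
qed

lemma LE_empty: "LE {} = {[]}"
  by (auto simp: LE_def)

lemma shufs_pos:
  assumes "distinct js" "finite Q"
  shows "shufs (map (\<lambda>j. pos j Q) js) = mset_set (LE {x\<in>Q. fst x \<in> set js})"
  using assms(1)
proof (induction js)
  case Nil then show ?case by (simp add: LE_empty)
next
  case (Cons j js)
  define Q' where "Q' = {x\<in>Q. fst x \<in> set js}"
  define Q'' where "Q'' = {x\<in>Q. fst x \<in> set (j # js)}"
  have jn: "j \<notin> set js" using Cons.prems by simp
  have fQ': "finite Q'" using assms(2) unfolding Q'_def by simp
  have "shufs (map (\<lambda>j. pos j Q) (j # js)) = sum_mset (image_mset (sh (pos j Q)) (mset_set (LE Q')))"
    using Cons by (simp add: Q'_def)
  also have "\<dots> = (\<Sum>v\<in>LE Q'. sh (pos j Q) v)" by (simp add: sum_unfold_sum_mset)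
  also have "\<dots> = (\<Sum>v\<in>LE Q'. mset_set (Sset j (pos j Q) v))"
  proof (rule sum.cong[OF refl])
    fix v assume v: "v \<in> LE Q'"
    show "sh (pos j Q) v = mset_set (Sset j (pos j Q) v)"
    proof (rule sh_char)
      show "sorted_wrt R (pos j Q)" by (rule sorted_pos)
      show "sorted_wrt R v" using v by (simp add: LE_def)
      show "\<forall>x\<in>set (pos j Q). fst x = j" using set_pos[OF assms(2)] by simp
      show "\<forall>y\<in>set v. fst y \<noteq> j" using v jn by (auto simp: LE_def Q'_def)
    qed
  qed
  also have "\<dots> = mset_set (\<Union>v\<in>LE Q'. Sset j (pos j Q) v)"
  proof (rule mset_set_UN[symmetric])
    show "finite (LE Q')" using finite_LE[OF fQ'] .
    show "finite (Sset j (pos j Q) v)" for v by (rule finite_Sset)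
    show "Sset j (pos j Q) v \<inter> Sset j (pos j Q) v' = {}" if "v \<noteq> v'" for v v'
      using that unfolding Sset_def by blast
  qed
  also have "(\<Union>v\<in>LE Q'. Sset j (pos j Q) v) = LE Q''"
  proof (intro equalityI subsetI)
    fix L assume "L \<in> (\<Union>v\<in>LE Q'. Sset j (pos j Q) v)"
    then obtain v where v: "v \<in> LE Q'" "L \<in> Sset j (pos j Q) v" by blast
    have "set L = set (pos j Q) \<union> set v" "sorted_wrt R L"
      using v(2) unfolding Sset_def by blast+
    moreover have "set v = Q'" using v(1) by (simp add: LE_def)
    ultimately show "L \<in> LE Q''" unfolding LE_def Q''_def Q'_def set_pos[OF assms(2)] by auto
  next
    fix L assume L: "L \<in> LE Q''"
    define v where "v = filter (\<lambda>x. fst x \<noteq> j) L"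
    have sL: "set L = Q''" and soL: "sorted_wrt R L" using L by (simp_all add: LE_def)
    have "set v = Q'" unfolding v_def using sL jn by (auto simp: Q'_def Q''_def)
    moreover have "sorted_wrt R v" unfolding v_def using soL by (rule sorted_wrt_filter)
    ultimately have vL: "v \<in> LE Q'" by (simp add: LE_def)
    have "set L = set (pos j Q) \<union> set v"
      using sL \<open>set v = Q'\<close> unfolding set_pos[OF assms(2)] Q'_def Q''_def by auto
    then have "L \<in> Sset j (pos j Q) v" using soL unfolding Sset_def v_def by blast
    with vL show "L \<in> (\<Union>v\<in>LE Q'. Sset j (pos j Q) v)" by blast
  qed
  finally show ?case by (simp add: Q''_def)
qed

definition lett :: "nat list list \<Rightarrow> nat \<times> nat \<Rightarrow> nat" where
  "lett ts x = ts ! fst x ! snd x"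

definition slices :: "nat list list \<Rightarrow> (nat \<times> nat) set \<Rightarrow> nat list list" where
  "slices ts Q = map (\<lambda>j. subword ts Q j) [0..<length ts]"

lemma subword_pos: "subword ts Q j = map (lett ts) (pos j Q)"
  by (simp add: subword_def pos_def lett_def)

lemma tpair_slices:
  assumes "finite Q" "\<forall>x\<in>Q. fst x < length ts"
  shows "tpair x (foldr tshuffle (map ew (slices ts Q)) (ew [])) = (\<Sum>L\<in>LE Q. x (map (lett ts) L))"
proof -
  have "slices ts Q = map (map (lett ts)) (map (\<lambda>j. pos j Q) [0..<length ts])"
    by (simp add: slices_def subword_pos)
  then have "shufs (slices ts Q) = image_mset (map (lett ts)) (shufs (map (\<lambda>j. pos j Q) [0..<length ts]))"
    by (simp only: shufs_map)
  also have "\<dots> = image_mset (map (lett ts)) (mset_set (LE {y\<in>Q. fst y \<in> set [0..<length ts]}))"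
    by (simp only: shufs_pos[OF distinct_upt assms(1)])
  also have "{y\<in>Q. fst y \<in> set [0..<length ts]} = Q" using assms(2) by auto
  finally have e: "shufs (slices ts Q) = image_mset (map (lett ts)) (mset_set (LE Q))" .
  show ?thesis
    unfolding foldr_shuffle_count tpair_count e
    by (simp add: sum_unfold_sum_mset multiset.map_comp comp_def)
qed

lemma slices_full: "slices ts (word_poset ts) = ts"
proof -
  have "subword ts (word_poset ts) j = ts ! j" if "j < length ts" for j
  proof -
    have "{q. (j, q) \<in> word_poset ts} = {..<length (ts ! j)}" using that by (auto simp: word_poset_def)
    then show ?thesis by (simp add: subword_def lessThan_atLeast0 map_nth)
  qed
  then show ?thesis unfolding slices_def by (intro nth_equalityI) simp_all
qed

definition DS :: "(nat \<times> nat) set \<Rightarrow> (nat \<times> nat) set set" where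
  "DS Q = {Q1. Q1 \<subseteq> Q \<and> (\<forall>x\<in>Q1. \<forall>z\<in>Q. fst z = fst x \<and> snd z \<le> snd x \<longrightarrow> z \<in> Q1)}"

definition FM :: "(nat \<times> nat) set \<Rightarrow> nat \<Rightarrow> (nat \<times> nat \<Rightarrow> nat) set" where
  "FM Q m = {f \<in> Q \<rightarrow>\<^sub>E {..<m}. \<forall>x\<in>Q. \<forall>z\<in>Q. fst x = fst z \<and> snd x \<le> snd z \<longrightarrow> f x \<le> f z}"

lemma finite_DS: "finite Q \<Longrightarrow> finite (DS Q)"
  by (rule finite_subset[of _ "Pow Q"]) (auto simp: DS_def)

lemma finite_FM: "finite Q \<Longrightarrow> finite (FM Q m)"
  by (rule finite_subset[of _ "Q \<rightarrow>\<^sub>E {..<m}"]) (auto simp: FM_def finite_PiE)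

lemma split_LE:
  assumes "finite Q"
  shows "(\<Sum>L\<in>LE Q. \<Sum>i\<le>length L. h (take i L) (drop i L))
       = (\<Sum>Q1\<in>DS Q. \<Sum>L1\<in>LE Q1. \<Sum>L2\<in>LE (Q - Q1). h L1 L2)"
proof -
  have fDS: "finite (DS Q)" using assms by (rule finite_DS)
  have fLE: "finite (LE A)" if "A \<subseteq> Q" for A using finite_LE finite_subset[OF that assms] by blast
  have "(\<Sum>L\<in>LE Q. \<Sum>i\<le>length L. h (take i L) (drop i L))
      = (\<Sum>p\<in>Sigma (LE Q) (\<lambda>L. {..length L}). h (take (snd p) (fst p)) (drop (snd p) (fst p)))"
    using finite_LE[OF assms] by (simp add: sum.Sigma split_def)
  also have "\<dots> = (\<Sum>t\<in>Sigma (DS Q) (\<lambda>Q1. LE Q1 \<times> LE (Q - Q1)). h (fst (snd t)) (snd (snd t)))"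
  proof (rule sum.reindex_bij_witness[where i = "\<lambda>t. (fst (snd t) @ snd (snd t), length (fst (snd t)))"
        and j = "\<lambda>p. (set (take (snd p) (fst p)), (take (snd p) (fst p), drop (snd p) (fst p)))"])
    fix p assume p: "p \<in> Sigma (LE Q) (\<lambda>L. {..length L})"
    then obtain L i where pLi: "p = (L, i)" "L \<in> LE Q" "i \<le> length L" by auto
    show "(fst (snd (set (take (snd p) (fst p)), take (snd p) (fst p), drop (snd p) (fst p))) @
          snd (snd (set (take (snd p) (fst p)), take (snd p) (fst p), drop (snd p) (fst p))),
          length (fst (snd (set (take (snd p) (fst p)), take (snd p) (fst p), drop (snd p) (fst p))))) = p"
      using pLi by simp
    have sL: "set L = Q" and soL: "sorted_wrt R L" using pLi(2) by (simp_all add: LE_def)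
    have dL: "distinct L" using soL by (rule sortedR_distinct)
    have soT: "sorted_wrt R (take i L)" and soD: "sorted_wrt R (drop i L)" using soL by simp_all
    have cross: "\<And>a b. a \<in> set (take i L) \<Longrightarrow> b \<in> set (drop i L) \<Longrightarrow> R a b"
      using soL unfolding sorted_wrt_append[of R "take i L" "drop i L", simplified] by blast
    have u: "set (take i L) \<union> set (drop i L) = Q"
      using sL by (metis append_take_drop_id set_append)
    have dj: "set (take i L) \<inter> set (drop i L) = {}"
      using set_take_disj_set_drop_if_distinct[OF dL, of i i] by simp
    have sD: "set (drop i L) = Q - set (take i L)" using u dj by blast
    have "set (take i L) \<in> DS Q"
      unfolding DS_def
    proof (intro CollectI conjI ballI impI)
      show "set (take i L) \<subseteq> Q" using sL by (metis set_take_subset)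
      fix x z assume x: "x \<in> set (take i L)" and z: "z \<in> Q" and xz: "fst z = fst x \<and> snd z \<le> snd x"
      show "z \<in> set (take i L)"
      proof (rule ccontr)
        assume "z \<notin> set (take i L)"
        then have "z \<in> set (drop i L)" using sD z by blast
        then have "R x z" using cross x by blast
        then show False using xz unfolding R_def by auto
      qed
    qed
    then show "(set (take (snd p) (fst p)), take (snd p) (fst p), drop (snd p) (fst p))
          \<in> Sigma (DS Q) (\<lambda>Q1. LE Q1 \<times> LE (Q - Q1))"
      using pLi soT soD sD by (simp add: LE_def)
  next
    fix t assume t: "t \<in> Sigma (DS Q) (\<lambda>Q1. LE Q1 \<times> LE (Q - Q1))"
    then obtain Q1 L1 L2 where tQ: "t = (Q1, L1, L2)" "Q1 \<in> DS Q" "L1 \<in> LE Q1" "L2 \<in> LE (Q - Q1)" by auto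
    have s1: "set L1 = Q1" and s2: "set L2 = Q - Q1" and so1: "sorted_wrt R L1" and so2: "sorted_wrt R L2"
      using tQ by (simp_all add: LE_def)
    have Q1Q: "Q1 \<subseteq> Q" and dsQ: "\<And>x z. x \<in> Q1 \<Longrightarrow> z \<in> Q \<Longrightarrow> fst z = fst x \<Longrightarrow> snd z \<le> snd x \<Longrightarrow> z \<in> Q1"
      using tQ(2) unfolding DS_def by blast+
    show "(set (take (snd (fst (snd t) @ snd (snd t), length (fst (snd t))))
                 (fst (fst (snd t) @ snd (snd t), length (fst (snd t))))),
           take (snd (fst (snd t) @ snd (snd t), length (fst (snd t))))
                 (fst (fst (snd t) @ snd (snd t), length (fst (snd t)))),
           drop (snd (fst (snd t) @ snd (snd t), length (fst (snd t))))
                 (fst (fst (snd t) @ snd (snd t), length (fst (snd t))))) = t"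
      using tQ s1 by simp
    have "\<forall>a\<in>set L1. \<forall>b\<in>set L2. R a b"
    proof (intro ballI)
      fix a b assume a: "a \<in> set L1" and b: "b \<in> set L2"
      have "a \<in> Q1" "b \<in> Q" "b \<notin> Q1" using a b s1 s2 by auto
      then have "a \<noteq> b" by blast
      moreover have "fst a = fst b \<longrightarrow> snd a < snd b"
        using dsQ[of a b] \<open>a \<in> Q1\<close> \<open>b \<in> Q\<close> \<open>b \<notin> Q1\<close> by (metis not_le)
      ultimately show "R a b" by (simp add: R_def)
    qed
    then have "sorted_wrt R (L1 @ L2)" using so1 so2 by (simp add: sorted_wrt_append)
    moreover have "set (L1 @ L2) = Q" using s1 s2 Q1Q by auto
    ultimately show "(fst (snd t) @ snd (snd t), length (fst (snd t))) \<in> Sigma (LE Q) (\<lambda>L. {..length L})"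
      using tQ by (simp add: LE_def)
  next
    fix p assume "p \<in> Sigma (LE Q) (\<lambda>L. {..length L})"
    show "h (fst (snd (set (take (snd p) (fst p)), take (snd p) (fst p), drop (snd p) (fst p))))
            (snd (snd (set (take (snd p) (fst p)), take (snd p) (fst p), drop (snd p) (fst p))))
          = h (take (snd p) (fst p)) (drop (snd p) (fst p))" by simp
  qed
  also have "\<dots> = (\<Sum>Q1\<in>DS Q. \<Sum>p\<in>LE Q1 \<times> LE (Q - Q1). h (fst p) (snd p))"
  proof -
    have "\<forall>Q1\<in>DS Q. finite (LE Q1 \<times> LE (Q - Q1))" using fLE by (auto simp: DS_def)
    then show ?thesis using fDS by (simp add: sum.Sigma split_def)
  qed
  also have "\<dots> = (\<Sum>Q1\<in>DS Q. \<Sum>L1\<in>LE Q1. \<Sum>L2\<in>LE (Q - Q1). h L1 L2)"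
    by (rule sum.cong[OF refl]) (simp add: sum.cartesian_product split_def)
  finally show ?thesis .
qed

definition Bd :: "(nat list \<Rightarrow> real) \<Rightarrow> (nat \<times> nat \<Rightarrow> nat) \<Rightarrow> (nat \<times> nat) set \<Rightarrow> (nat \<times> nat \<Rightarrow> nat) \<Rightarrow> nat \<Rightarrow> real" where
  "Bd y g D f l = (\<Sum>L\<in>LE {x\<in>D. f x = l}. y (map g L))"

lemma tpow_LE:
  assumes "finite Q"
  shows "(\<Sum>L\<in>LE Q. tpow y m (map g L)) = (\<Sum>f\<in>FM Q m. \<Prod>l<m. Bd y g Q f l)"
  using assms
proof (induction m arbitrary: Q)
  case 0
  show ?case
  proof (cases "Q = {}")
    case True
    have "FM Q 0 = {\<lambda>x. undefined}" using True by (simp add: FM_def)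
    then show ?thesis using True by (simp add: LE_empty ew_def)
  next
    case False
    have "FM Q 0 = {}" using False by (auto simp: FM_def PiE_eq_empty_iff)
    moreover have "tpow y 0 (map g L) = 0" if "L \<in> LE Q" for L
    proof -
      have "L \<noteq> []" using that False by (auto simp: LE_def)
      then show ?thesis by (simp add: ew_def)
    qed
    ultimately show ?thesis by simp
  qed
next
  case (Suc m)
  have fQ: "finite Q" by fact
  have fDS: "finite (DS Q)" using fQ by (rule finite_DS)
  have fLE: "finite (LE A)" if "A \<subseteq> Q" for A using finite_LE finite_subset[OF that fQ] by blast
  define A where "A Q1 = (\<Sum>L1\<in>LE Q1. y (map g L1))" for Q1
  have "(\<Sum>L\<in>LE Q. tpow y (Suc m) (map g L))
      = (\<Sum>L\<in>LE Q. \<Sum>i\<le>length L. y (map g (take i L)) * tpow y m (map g (drop i L)))"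
    by (simp add: tmul_def take_map drop_map)
  also have "\<dots> = (\<Sum>Q1\<in>DS Q. \<Sum>L1\<in>LE Q1. \<Sum>L2\<in>LE (Q - Q1). y (map g L1) * tpow y m (map g L2))"
    by (rule split_LE[OF fQ])
  also have "\<dots> = (\<Sum>Q1\<in>DS Q. A Q1 * (\<Sum>L2\<in>LE (Q - Q1). tpow y m (map g L2)))"
    by (simp add: A_def sum_product)
  also have "\<dots> = (\<Sum>Q1\<in>DS Q. A Q1 * (\<Sum>f\<in>FM (Q - Q1) m. \<Prod>l<m. Bd y g (Q - Q1) f l))"
    using Suc.IH fQ by simp
  also have "\<dots> = (\<Sum>t\<in>Sigma (DS Q) (\<lambda>Q1. FM (Q - Q1) m). A (fst t) * (\<Prod>l<m. Bd y g (Q - fst t) (snd t) l))"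
    using fDS fQ by (simp add: sum_distrib_left sum.Sigma split_def finite_FM)
  also have "\<dots> = (\<Sum>f\<in>FM Q (Suc m). \<Prod>l<Suc m. Bd y g Q f l)"
  proof (rule sum.reindex_bij_witness[where j = "\<lambda>t x. if x \<in> Q then (if x \<in> fst t then 0 else Suc (snd t x)) else undefined"
        and i = "\<lambda>f. ({x\<in>Q. f x = 0}, \<lambda>x. if x \<in> Q \<and> f x \<noteq> 0 then f x - 1 else undefined)"])
    fix t assume t: "t \<in> Sigma (DS Q) (\<lambda>Q1. FM (Q - Q1) m)"
    then obtain Q1 g' where tQ: "t = (Q1, g')" "Q1 \<in> DS Q" "g' \<in> FM (Q - Q1) m" by auto
    have Q1Q: "Q1 \<subseteq> Q" and dsQ: "\<And>x z. x \<in> Q1 \<Longrightarrow> z \<in> Q \<Longrightarrow> fst z = fst x \<Longrightarrow> snd z \<le> snd x \<Longrightarrow> z \<in> Q1"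
      using tQ(2) unfolding DS_def by blast+
    have g'E: "g' \<in> Q - Q1 \<rightarrow>\<^sub>E {..<m}"
      and g'op: "\<And>x z. x \<in> Q - Q1 \<Longrightarrow> z \<in> Q - Q1 \<Longrightarrow> fst x = fst z \<Longrightarrow> snd x \<le> snd z \<Longrightarrow> g' x \<le> g' z"
      using tQ(3) unfolding FM_def by blast+
    have g'u: "g' x = undefined" if "x \<notin> Q - Q1" for x using g'E that by (rule PiE_arb)
    define f where "f = (\<lambda>x. if x \<in> Q then (if x \<in> fst t then 0 else Suc (snd t x)) else undefined)"
    have f0: "{x\<in>Q. f x = 0} = Q1" using Q1Q tQ(1) by (auto simp: f_def)
    show "({x\<in>Q. (if x \<in> Q then (if x \<in> fst t then 0 else Suc (snd t x)) else undefined) = 0},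
           \<lambda>x. if x \<in> Q \<and> (if x \<in> Q then (if x \<in> fst t then 0 else Suc (snd t x)) else undefined) \<noteq> 0
               then (if x \<in> Q then (if x \<in> fst t then 0 else Suc (snd t x)) else undefined) - 1 else undefined) = t"
      using Q1Q tQ(1) g'u by (auto intro!: ext)
    have "f \<in> FM Q (Suc m)"
      unfolding FM_def
    proof (intro CollectI conjI ballI impI)
      show "f \<in> Q \<rightarrow>\<^sub>E {..<Suc m}" using g'E tQ(1) by (auto simp: f_def PiE_def Pi_def extensional_def)
      fix x z assume x: "x \<in> Q" and z: "z \<in> Q" and xz: "fst x = fst z \<and> snd x \<le> snd z"
      show "f x \<le> f z"
      proof (cases "x \<in> Q1")
        case True then show ?thesis using x tQ(1) by (simp add: f_def)
      next
        case False
        then have "z \<notin> Q1" using dsQ[of z x] x xz by auto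
        then show ?thesis using g'op[of x z] x z xz False tQ(1) by (simp add: f_def)
      qed
    qed
    then show "(\<lambda>x. if x \<in> Q then (if x \<in> fst t then 0 else Suc (snd t x)) else undefined) \<in> FM Q (Suc m)"
      by (simp add: f_def)
    have "Bd y g Q f (Suc l) = Bd y g (Q - Q1) g' l" for l
    proof -
      have "{x\<in>Q. f x = Suc l} = {x\<in>Q - Q1. g' x = l}" using tQ(1) by (auto simp: f_def)
      then show ?thesis by (simp add: Bd_def)
    qed
    moreover have "Bd y g Q f 0 = A Q1" using f0 by (simp add: Bd_def A_def)
    ultimately have "(\<Prod>l<Suc m. Bd y g Q f l) = A (fst t) * (\<Prod>l<m. Bd y g (Q - fst t) (snd t) l)"
      unfolding prod.lessThan_Suc_shift using tQ(1) by simp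
    then show "(\<Prod>l<Suc m. Bd y g Q (\<lambda>x. if x \<in> Q then (if x \<in> fst t then 0 else Suc (snd t x)) else undefined) l)
          = A (fst t) * (\<Prod>l<m. Bd y g (Q - fst t) (snd t) l)" by (simp add: f_def)
  next
    fix f assume f: "f \<in> FM Q (Suc m)"
    have fE: "f \<in> Q \<rightarrow>\<^sub>E {..<Suc m}"
      and fop: "\<And>x z. x \<in> Q \<Longrightarrow> z \<in> Q \<Longrightarrow> fst x = fst z \<Longrightarrow> snd x \<le> snd z \<Longrightarrow> f x \<le> f z"
      using f unfolding FM_def by blast+
    have fu: "f x = undefined" if "x \<notin> Q" for x using fE that by (rule PiE_arb)
    show "(\<lambda>x. if x \<in> Q then (if x \<in> fst ({x\<in>Q. f x = 0}, \<lambda>x. if x \<in> Q \<and> f x \<noteq> 0 then f x - 1 else undefined) then 0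
            else Suc (snd ({x\<in>Q. f x = 0}, \<lambda>x. if x \<in> Q \<and> f x \<noteq> 0 then f x - 1 else undefined) x)) else undefined) = f"
      using fu by (auto intro!: ext)
    define Q1 where "Q1 = {x\<in>Q. f x = 0}"
    define g' where "g' = (\<lambda>x. if x \<in> Q \<and> f x \<noteq> 0 then f x - 1 else undefined)"
    have "Q1 \<in> DS Q"
    proof -
      have "z \<in> Q1" if "x \<in> Q1" "z \<in> Q" "fst z = fst x" "snd z \<le> snd x" for x z
        using that fop[of z x] by (auto simp: Q1_def)
      then show ?thesis unfolding DS_def Q1_def by blast
    qed
    moreover have "g' \<in> FM (Q - Q1) m"
      unfolding FM_def
    proof (intro CollectI conjI ballI impI)
      show "g' \<in> Q - Q1 \<rightarrow>\<^sub>E {..<m}"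
      proof (rule PiE_I)
        fix x assume x: "x \<in> Q - Q1"
        then have "f x < Suc m" "f x \<noteq> 0" using PiE_mem[OF fE, of x] by (auto simp: Q1_def)
        then show "g' x \<in> {..<m}" using x by (auto simp: g'_def Q1_def)
      next
        fix x assume "x \<notin> Q - Q1" then show "g' x = undefined" by (auto simp: g'_def Q1_def)
      qed
      fix x z assume "x \<in> Q - Q1" "z \<in> Q - Q1" "fst x = fst z \<and> snd x \<le> snd z"
      then show "g' x \<le> g' z" using fop[of x z] by (auto simp: g'_def Q1_def)
    qed
    ultimately show "({x\<in>Q. f x = 0}, \<lambda>x. if x \<in> Q \<and> f x \<noteq> 0 then f x - 1 else undefined)
          \<in> Sigma (DS Q) (\<lambda>Q1. FM (Q - Q1) m)" by (simp add: Q1_def g'_def)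
  qed
  finally show ?case .
qed

lemma sh_set: "\<sigma> \<in># sh u v \<Longrightarrow> set \<sigma> = set u \<union> set v"
  by (induction u v arbitrary: \<sigma> rule: sh.induct) auto

lemma shufs_set: "\<sigma> \<in># shufs ws \<Longrightarrow> set \<sigma> = (\<Union>w\<in>set ws. set w)"
proof (induction ws arbitrary: \<sigma>)
  case Nil then show ?case by simp
next
  case (Cons w ws)
  then obtain v where "v \<in># shufs ws" "\<sigma> \<in># sh w v" by auto
  then show ?case using Cons.IH[of v] sh_set[of \<sigma> w v] by auto
qed

lemma is_poly_foldr:
  assumes "\<forall>w\<in>set ws. is_word d w"
  shows "is_poly d (foldr tshuffle (map ew ws) (ew []))"
  unfolding foldr_shuffle_count is_poly_def is_series_def tsupp_count
proof (intro conjI allI impI)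
  fix \<tau> assume "\<not> is_word d \<tau>"
  then have "\<tau> \<notin># shufs ws" using shufs_set[of \<tau> ws] assms by (auto simp: is_word_def)
  then show "real (count (shufs ws) \<tau>) = 0" by (simp add: not_in_iff)
qed simp

lemma is_poly_ew: "is_word d w \<Longrightarrow> is_poly d (ew w)"
  unfolding is_poly_def is_series_def tsupp_ew by (auto simp: ew_def)

lemma tpair_ew: "tpair x (ew w) = x w"
  unfolding tpair_def tsupp_ew by (simp add: ew_def)

lemma shuffle_prod:
  assumes hom: "\<forall>f g. is_poly d f \<and> is_poly d g \<longrightarrow> tpair x (tshuffle f g) = tpair x f * tpair x g"
    and x0: "x [] = 1" and ws: "\<forall>w\<in>set ws. is_word d w"
  shows "tpair x (foldr tshuffle (map ew ws) (ew [])) = prod_list (map x ws)"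
  using ws
proof (induction ws)
  case Nil then show ?case using x0 by (simp add: tpair_ew)
next
  case (Cons w ws)
  have "tpair x (foldr tshuffle (map ew (w # ws)) (ew [])) = tpair x (tshuffle (ew w) (foldr tshuffle (map ew ws) (ew [])))"
    by simp
  also have "\<dots> = tpair x (ew w) * tpair x (foldr tshuffle (map ew ws) (ew []))"
    using hom is_poly_ew[of d w] is_poly_foldr[of ws d] Cons.prems by simp
  finally show ?case using Cons by (simp add: tpair_ew)
qed

lemma tpow_zero:
  assumes "y [] = 0" "length w < m"
  shows "tpow y m w = 0"
  using assms(2)
proof (induction m arbitrary: w)
  case 0 then show ?case by simp
next
  case (Suc m)
  have "y (take i w) * tpow y m (drop i w) = 0" if "i \<le> length w" for i
  proof (cases "i = 0")
    case True then show ?thesis using assms(1) by simp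
  next
    case False
    then have "length (drop i w) < m" using Suc.prems that by auto
    then show ?thesis using Suc.IH by simp
  qed
  then show ?case unfolding tpow.simps tmul_def by (intro sum.neutral) simp
qed

locale setting =
  fixes M :: "'w measure" and X :: "'w \<Rightarrow> real \<times> real \<Rightarrow> nat list \<Rightarrow> real"
    and d :: nat and p T :: real and ts :: "nat list list"
  assumes prob: "prob_space M" and T0: "0 \<le> T"
    and rp: "\<forall>\<omega>\<in>space M. X \<omega> \<in> wg_rough_paths d p T"
    and integ: "\<forall>\<sigma>. is_word d \<sigma> \<longrightarrow> integrable M (\<lambda>\<omega>. X \<omega> (0, T) \<sigma>)"
    and words: "\<forall>\<tau>\<in>set ts. \<tau> \<noteq> [] \<and> is_word d \<tau>"
    and ne: "ts \<noteq> []"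
begin

abbreviation P where "P \<equiv> word_poset ts"

definition Jset :: "(nat \<times> nat) set \<Rightarrow> nat set" where
  "Jset Q = {j. j < length ts \<and> {q. (j, q) \<in> Q} \<noteq> {}}"

definition mom :: "(nat \<times> nat) set \<Rightarrow> real" where
  "mom Q = integral\<^sup>L M (\<lambda>\<omega>. \<Prod>j\<in>Jset Q. X \<omega> (0, T) (subword ts Q j))"

lemma xprops:
  assumes "\<omega> \<in> space M"
  shows "X \<omega> (0, T) [] = 1"
    and "\<forall>f g. is_poly d f \<and> is_poly d g \<longrightarrow>
           tpair (X \<omega> (0, T)) (tshuffle f g) = tpair (X \<omega> (0, T)) f * tpair (X \<omega> (0, T)) g"
proof -
  have "X \<omega> \<in> wg_rough_paths d p T" using rp assms by blast
  then have "is_series d (X \<omega> (0, T)) \<and> X \<omega> (0, T) [] = 1 \<and>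
        (\<forall>f g. is_poly d f \<and> is_poly d g \<longrightarrow>
           tpair (X \<omega> (0, T)) (tshuffle f g) = tpair (X \<omega> (0, T)) f * tpair (X \<omega> (0, T)) g)"
    unfolding wg_rough_paths_def using T0 by blast
  then show "X \<omega> (0, T) [] = 1"
    and "\<forall>f g. is_poly d f \<and> is_poly d g \<longrightarrow>
           tpair (X \<omega> (0, T)) (tshuffle f g) = tpair (X \<omega> (0, T)) f * tpair (X \<omega> (0, T)) g"
    by blast+
qed

lemma P_Sigma: "P = (SIGMA j:{..<length ts}. {..<length (ts ! j)})"
  by (auto simp: word_poset_def)

lemma finP: "finite P"
  unfolding P_Sigma by (intro finite_SigmaI) auto

lemma fstP: "x \<in> P \<Longrightarrow> fst x < length ts"
  by (auto simp: word_poset_def)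

lemma lettP: "x \<in> P \<Longrightarrow> lett ts x \<in> {1..d}"
proof -
  assume x: "x \<in> P"
  then have j: "fst x < length ts" and q: "snd x < length (ts ! fst x)" by (auto simp: word_poset_def)
  have "ts ! fst x \<in> set ts" using j by simp
  then have "set (ts ! fst x) \<subseteq> {1..d}" using words by (auto simp: is_word_def)
  moreover have "ts ! fst x ! snd x \<in> set (ts ! fst x)" using q by simp
  ultimately show ?thesis by (auto simp: lett_def)
qed

lemma word_map: "set L \<subseteq> P \<Longrightarrow> is_word d (map (lett ts) L)"
  using lettP unfolding is_word_def by auto

lemma subword_word:
  assumes "Q \<subseteq> P" shows "is_word d (subword ts Q j)"
proof -
  have "finite Q" using finite_subset[OF assms finP] .
  then have "set (pos j Q) \<subseteq> P" using assms by (simp add: set_pos) blast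
  then show ?thesis unfolding subword_pos by (rule word_map)
qed

lemma pointwise:
  assumes Q: "Q \<subseteq> P" and \<omega>: "\<omega> \<in> space M"
  shows "(\<Sum>L\<in>LE Q. X \<omega> (0, T) (map (lett ts) L)) = (\<Prod>j\<in>Jset Q. X \<omega> (0, T) (subword ts Q j))"
proof -
  have fQ: "finite Q" using finite_subset[OF Q finP] .
  have Qf: "\<forall>x\<in>Q. fst x < length ts" using Q fstP by blast
  have "(\<Sum>L\<in>LE Q. X \<omega> (0, T) (map (lett ts) L)) = tpair (X \<omega> (0, T)) (foldr tshuffle (map ew (slices ts Q)) (ew []))"
    by (rule tpair_slices[OF fQ Qf, symmetric])
  also have "\<dots> = prod_list (map (X \<omega> (0, T)) (slices ts Q))"
    by (rule shuffle_prod[OF xprops(2)[OF \<omega>] xprops(1)[OF \<omega>]])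
       (auto simp: slices_def intro: subword_word[OF Q])
  also have "\<dots> = (\<Prod>j\<in>{0..<length ts}. X \<omega> (0, T) (subword ts Q j))"
    by (simp add: slices_def prod.distinct_set_conv_list[symmetric] comp_def)
  also have "\<dots> = (\<Prod>j\<in>Jset Q. X \<omega> (0, T) (subword ts Q j))"
  proof (rule prod.mono_neutral_right)
    show "Jset Q \<subseteq> {0..<length ts}" by (auto simp: Jset_def)
    show "\<forall>i\<in>{0..<length ts} - Jset Q. X \<omega> (0, T) (subword ts Q i) = 1"
      using xprops(1)[OF \<omega>] by (auto simp: Jset_def subword_def)
  qed simp
  finally show ?thesis .
qed

lemma expect:
  assumes Q: "Q \<subseteq> P"
  shows "(\<Sum>L\<in>LE Q. exp_sig M X T (map (lett ts) L)) = mom Q"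
proof -
  have int: "integrable M (\<lambda>\<omega>. X \<omega> (0, T) (map (lett ts) L))" if "L \<in> LE Q" for L
    using integ word_map[of L] that Q by (auto simp: LE_def)
  have "(\<Sum>L\<in>LE Q. exp_sig M X T (map (lett ts) L))
      = integral\<^sup>L M (\<lambda>\<omega>. \<Sum>L\<in>LE Q. X \<omega> (0, T) (map (lett ts) L))"
    unfolding exp_sig_def using int by (simp add: integral_sum)
  also have "\<dots> = mom Q"
    unfolding mom_def by (intro Bochner_Integration.integral_cong refl pointwise[OF Q])
  finally show ?thesis .
qed

lemma mu0: "exp_sig M X T [] = 1"
proof -
  have "exp_sig M X T [] = integral\<^sup>L M (\<lambda>\<omega>. 1)"
    unfolding exp_sig_def by (intro Bochner_Integration.integral_cong refl) (simp add: xprops(1))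
  also have "\<dots> = 1" using prob_space.prob_space[OF prob] by simp
  finally show ?thesis .
qed

end

lemma kern_alt: "kern P f = (\<lambda>x. {z\<in>P. f z = f x}) ` P"
  by (auto simp: kern_def)

lemma kern_cong:
  assumes "\<And>x z. x \<in> P \<Longrightarrow> z \<in> P \<Longrightarrow> g x = g z \<longleftrightarrow> f x = f z"
  shows "kern P g = kern P f"
proof -
  have "{z\<in>P. g z = g x} = {z\<in>P. f z = f x}" if "x \<in> P" for x using assms that by auto
  then show ?thesis unfolding kern_alt by (auto simp: image_def)
qed

lemma kern_inj: "inj_on (\<lambda>n. {x\<in>P. f x = n}) (f ` P)"
  by (auto simp: inj_on_def)

lemma card_kern: "card (kern P f) = card (f ` P)"
  unfolding kern_def by (rule card_image[OF kern_inj])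

lemma prod_kern: "(\<Prod>B\<in>kern P f. h B) = (\<Prod>n\<in>f ` P. h {x\<in>P. f x = n})"
  unfolding kern_def by (rule prod.reindex[OF kern_inj, unfolded comp_def])

context setting
begin

definition ymu :: "nat list \<Rightarrow> real" where
  "ymu = (\<lambda>\<sigma>. exp_sig M X T \<sigma> - ew [] \<sigma>)"

definition FMS :: "nat \<Rightarrow> (nat \<times> nat \<Rightarrow> nat) set" where
  "FMS m = {f \<in> FM P m. f ` P = {..<m}}"

lemma ymu0: "ymu [] = 0"
  by (simp add: ymu_def mu0 ew_def)

lemma length_LE: "L \<in> LE P \<Longrightarrow> length L = card P"
  by (auto simp: LE_def dest!: sortedR_distinct distinct_card)

lemma LHS1:
  "tpair (sig_cumulant M X T) (foldr tshuffle (map ew ts) (ew []))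
   = (\<Sum>n<card P. (-1) ^ n / real (Suc n) * (\<Sum>f\<in>FM P (Suc n). \<Prod>l<Suc n. Bd ymu (lett ts) P f l))"
proof -
  have Pf: "\<forall>x\<in>P. fst x < length ts" using fstP by blast
  have "tpair (sig_cumulant M X T) (foldr tshuffle (map ew ts) (ew []))
      = (\<Sum>L\<in>LE P. sig_cumulant M X T (map (lett ts) L))"
    using tpair_slices[OF finP Pf, of "sig_cumulant M X T"] by (simp add: slices_full)
  also have "\<dots> = (\<Sum>L\<in>LE P. \<Sum>n<card P. (-1) ^ n / real (Suc n) * tpow ymu (Suc n) (map (lett ts) L))"
  proof (rule sum.cong[OF refl])
    fix L assume L: "L \<in> LE P"
    show "sig_cumulant M X T (map (lett ts) L)
        = (\<Sum>n<card P. (-1) ^ n / real (Suc n) * tpow ymu (Suc n) (map (lett ts) L))"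
      unfolding sig_cumulant_def tlog_def ymu_def[symmetric]
    proof (rule suminf_finite)
      fix n assume "n \<notin> {..<card P}"
      then have "length (map (lett ts) L) < Suc n" using length_LE[OF L] by simp
      then show "(-1) ^ n / real (Suc n) * tpow ymu (Suc n) (map (lett ts) L) = 0"
        by (simp only: tpow_zero[of ymu, OF ymu0 \<open>length (map (lett ts) L) < Suc n\<close>] mult_zero_right)
    qed simp
  qed
  also have "\<dots> = (\<Sum>n<card P. (-1) ^ n / real (Suc n) * (\<Sum>L\<in>LE P. tpow ymu (Suc n) (map (lett ts) L)))"
    by (simp add: sum.swap[of _ "LE P"] sum_distrib_left)
  also have "\<dots> = (\<Sum>n<card P. (-1) ^ n / real (Suc n) * (\<Sum>f\<in>FM P (Suc n). \<Prod>l<Suc n. Bd ymu (lett ts) P f l))"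
    by (simp only: tpow_LE[OF finP])
  finally show ?thesis .
qed

lemma Bd_eval:
  "Bd ymu (lett ts) P f l = (if {x\<in>P. f x = l} = {} then 0 else mom {x\<in>P. f x = l})"
proof (cases "{x\<in>P. f x = l} = {}")
  case True
  then show ?thesis by (simp only: Bd_def True LE_empty) (simp add: ymu0)
next
  case False
  have "Bd ymu (lett ts) P f l = (\<Sum>L\<in>LE {x\<in>P. f x = l}. exp_sig M X T (map (lett ts) L))"
    unfolding Bd_def
  proof (rule sum.cong[OF refl])
    fix L assume "L \<in> LE {x\<in>P. f x = l}"
    then have "L \<noteq> []" using False by (auto simp: LE_def)
    then show "ymu (map (lett ts) L) = exp_sig M X T (map (lett ts) L)" by (simp add: ymu_def ew_def)
  qed
  also have "\<dots> = mom {x\<in>P. f x = l}" by (rule expect) blast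
  finally show ?thesis by (simp only: if_not_P[OF False])
qed

lemma prod_Bd:
  assumes f: "f \<in> FM P m"
  shows "(\<Prod>l<m. Bd ymu (lett ts) P f l) = (if f ` P = {..<m} then (\<Prod>l<m. mom {x\<in>P. f x = l}) else 0)"
proof (cases "f ` P = {..<m}")
  case True
  have nef: "{x\<in>P. f x = l} \<noteq> {}" if "l < m" for l
  proof -
    have "l \<in> f ` P" using that True by simp
    then show ?thesis by blast
  qed
  have "Bd ymu (lett ts) P f l = mom {x\<in>P. f x = l}" if "l < m" for l
    by (simp only: Bd_eval if_not_P[OF nef[OF that]])
  then show ?thesis using True by simp
next
  case False
  have "f ` P \<subseteq> {..<m}" using f by (auto simp: FM_def PiE_def Pi_def)
  then obtain l where l: "l < m" "l \<notin> f ` P" using False by blast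
  then have "{x\<in>P. f x = l} = {}" by auto
  then have "Bd ymu (lett ts) P f l = 0" by (simp add: Bd_eval)
  then have "(\<Prod>l<m. Bd ymu (lett ts) P f l) = 0" using l by (intro prod_zero) auto
  then show ?thesis using False by simp
qed

lemma LHS2:
  "tpair (sig_cumulant M X T) (foldr tshuffle (map ew ts) (ew []))
   = (\<Sum>n<card P. \<Sum>f\<in>FMS (Suc n). (-1) ^ n / real (Suc n) * (\<Prod>l<Suc n. mom {x\<in>P. f x = l}))"
proof -
  have eq: "(\<Sum>f\<in>FM P m. \<Prod>l<m. Bd ymu (lett ts) P f l) = (\<Sum>f\<in>FMS m. \<Prod>l<m. mom {x\<in>P. f x = l})" for m
  proof -
    have "(\<Sum>f\<in>FM P m. \<Prod>l<m. Bd ymu (lett ts) P f l)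
        = (\<Sum>f\<in>FM P m. if f ` P = {..<m} then (\<Prod>l<m. mom {x\<in>P. f x = l}) else 0)"
      by (rule sum.cong[OF refl]) (rule prod_Bd)
    also have "\<dots> = (\<Sum>f\<in>FMS m. \<Prod>l<m. mom {x\<in>P. f x = l})"
      unfolding FMS_def by (rule sum.inter_filter[symmetric]) (rule finite_FM[OF finP])
    finally show ?thesis .
  qed
  show ?thesis unfolding LHS1 eq by (simp only: sum_distrib_left)
qed

end

context setting
begin

lemma order_pres_iff:
  "order_pres P word_le f \<longleftrightarrow> (\<forall>x\<in>P. \<forall>z\<in>P. fst x = fst z \<and> snd x \<le> snd z \<longrightarrow> f x \<le> f z)"
  by (simp add: order_pres_def word_le_def)

lemma P_ne: "P \<noteq> {}"
proof -
  have "ts ! 0 \<in> set ts" using ne by simp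
  then have "ts ! 0 \<noteq> []" using words by blast
  then have "(0, 0) \<in> P" using ne by (auto simp: word_poset_def)
  then show ?thesis by blast
qed

lemma finite_Orp: "finite (Orp P word_le)"
  by (rule finite_subset[of _ "Pow (Pow P)"]) (auto simp: Orp_def kern_def finP)

lemma finite_FMS: "finite (FMS m)"
  by (rule finite_subset[OF _ finite_FM[OF finP, of m]]) (auto simp: FMS_def)

lemma FMS_kern:
  assumes "f \<in> FMS m"
  shows "card (kern P f) = m" "(\<Prod>B\<in>kern P f. h B) = (\<Prod>l<m. h {x\<in>P. f x = l})"
    "kern P f \<in> Orp P word_le"
proof -
  have fP: "f ` P = {..<m}" and fFM: "f \<in> FM P m" using assms by (auto simp: FMS_def)
  show "card (kern P f) = m" using fP by (simp add: card_kern)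
  show "(\<Prod>B\<in>kern P f. h B) = (\<Prod>l<m. h {x\<in>P. f x = l})" using fP by (simp add: prod_kern)
  have "order_pres P word_le f" using fFM unfolding order_pres_iff FM_def by blast
  then show "kern P f \<in> Orp P word_le" unfolding Orp_def by blast
qed

lemma part_fact_eq: "part_fact P word_le b = card {f \<in> FMS (card b). kern P f = b}"
  unfolding part_fact_def
proof (rule bij_betw_same_card[of "\<lambda>f x. if x \<in> P then f x - 1 else undefined"],
       rule bij_betw_byWitness[where f' = "\<lambda>g x. if x \<in> P then Suc (g x) else undefined"])
  let ?c = "card b"
  let ?A1 = "{f \<in> P \<rightarrow>\<^sub>E {1..?c}. order_pres P word_le f \<and> kern P f = b}"
  let ?A2 = "{f \<in> FMS ?c. kern P f = b}"
  show "\<forall>f\<in>?A1. (\<lambda>x. if x \<in> P then Suc (if x \<in> P then f x - 1 else undefined) else undefined) = f"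
  proof
    fix f assume f: "f \<in> ?A1"
    then have fE: "f \<in> P \<rightarrow>\<^sub>E {1..?c}" by blast
    show "(\<lambda>x. if x \<in> P then Suc (if x \<in> P then f x - 1 else undefined) else undefined) = f"
    proof
      fix x show "(if x \<in> P then Suc (if x \<in> P then f x - 1 else undefined) else undefined) = f x"
      proof (cases "x \<in> P")
        case True then have "f x \<in> {1..?c}" using PiE_mem[OF fE] by blast
        then show ?thesis using True by simp
      next
        case False then show ?thesis using PiE_arb[OF fE False] by simp
      qed
    qed
  qed
  show "\<forall>g\<in>?A2. (\<lambda>x. if x \<in> P then (if x \<in> P then Suc (g x) else undefined) - 1 else undefined) = g"
  proof
    fix g assume g: "g \<in> ?A2"
    then have gE: "g \<in> P \<rightarrow>\<^sub>E {..<?c}" by (auto simp: FMS_def FM_def)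
    show "(\<lambda>x. if x \<in> P then (if x \<in> P then Suc (g x) else undefined) - 1 else undefined) = g"
      using PiE_arb[OF gE] by (auto intro!: ext)
  qed
  show "(\<lambda>f x. if x \<in> P then f x - 1 else undefined) ` ?A1 \<subseteq> ?A2"
  proof
    fix g assume "g \<in> (\<lambda>f x. if x \<in> P then f x - 1 else undefined) ` ?A1"
    then obtain f where f: "f \<in> ?A1" and g: "g = (\<lambda>x. if x \<in> P then f x - 1 else undefined)" by blast
    have fE: "f \<in> P \<rightarrow>\<^sub>E {1..?c}" and fop: "order_pres P word_le f" and fk: "kern P f = b"
      using f by blast+
    have "f ` P \<subseteq> {1..?c}" using fE by (auto simp: PiE_def Pi_def)
    moreover have "card (f ` P) = card {1..?c}" using fk card_kern[of P f] by simp
    ultimately have fP: "f ` P = {1..?c}" by (intro card_subset_eq) auto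
    have gE: "g \<in> P \<rightarrow>\<^sub>E {..<?c}"
    proof (rule PiE_I)
      fix x assume "x \<in> P" then have "f x \<in> {1..?c}" using fP by blast
      then show "g x \<in> {..<?c}" using \<open>x \<in> P\<close> g by auto
    qed (simp add: g)
    have "g \<in> FM P ?c"
      unfolding FM_def
    proof (intro CollectI conjI ballI impI)
      show "g \<in> P \<rightarrow>\<^sub>E {..<?c}" by (rule gE)
      fix x z assume x: "x \<in> P" and z: "z \<in> P" and xz: "fst x = fst z \<and> snd x \<le> snd z"
      then have "f x \<le> f z" using fop unfolding order_pres_iff by blast
      then show "g x \<le> g z" using x z g by simp
    qed
    moreover have "g ` P = {..<?c}"
    proof (intro equalityI subsetI)
      fix l assume "l \<in> g ` P" then show "l \<in> {..<?c}" using gE by (auto simp: PiE_def Pi_def)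
    next
      fix l assume "l \<in> {..<?c}"
      then have "Suc l \<in> f ` P" using fP by simp
      then obtain x where "x \<in> P" "f x = Suc l" by (metis imageE)
      then show "l \<in> g ` P" unfolding g by force
    qed
    moreover have "kern P g = b"
    proof -
      have "kern P g = kern P f"
      proof (rule kern_cong)
        fix x z assume "x \<in> P" "z \<in> P"
        then have "f x \<ge> 1" "f z \<ge> 1" using fP by auto
        then show "g x = g z \<longleftrightarrow> f x = f z" using \<open>x \<in> P\<close> \<open>z \<in> P\<close> g by auto
      qed
      then show ?thesis using fk by simp
    qed
    ultimately show "g \<in> ?A2" by (simp add: FMS_def)
  qed
  show "(\<lambda>g x. if x \<in> P then Suc (g x) else undefined) ` ?A2 \<subseteq> ?A1"
  proof
    fix f assume "f \<in> (\<lambda>g x. if x \<in> P then Suc (g x) else undefined) ` ?A2"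
    then obtain g where g: "g \<in> ?A2" and f: "f = (\<lambda>x. if x \<in> P then Suc (g x) else undefined)" by blast
    have gE: "g \<in> P \<rightarrow>\<^sub>E {..<?c}" and gop: "\<forall>x\<in>P. \<forall>z\<in>P. fst x = fst z \<and> snd x \<le> snd z \<longrightarrow> g x \<le> g z"
      and gk: "kern P g = b" using g by (auto simp: FMS_def FM_def)
    have "f \<in> P \<rightarrow>\<^sub>E {1..?c}"
    proof (rule PiE_I)
      fix x assume "x \<in> P" then have "g x < ?c" using PiE_mem[OF gE] by blast
      then show "f x \<in> {1..?c}" using \<open>x \<in> P\<close> f by auto
    qed (simp add: f)
    moreover have "order_pres P word_le f" unfolding order_pres_iff f using gop by auto
    moreover have "kern P f = b"
    proof -
      have "kern P f = kern P g" by (rule kern_cong) (simp add: f)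
      then show ?thesis using gk by simp
    qed
    ultimately show "f \<in> ?A1" by blast
  qed
qed

lemma RHS_to_LHS:
  "(\<Sum>b\<in>Orp P word_le. (-1) ^ (card b - 1) * real (part_fact P word_le b) / real (card b) * (\<Prod>B\<in>b. mom B))
   = (\<Sum>n<card P. \<Sum>f\<in>FMS (Suc n). (-1) ^ n / real (Suc n) * (\<Prod>l<Suc n. mom {x\<in>P. f x = l}))"
proof -
  define G where "G m f = (-1) ^ (m - 1) / real m * (\<Prod>l<m. mom {x\<in>P. f x = l})" for m f
  define S where "S b = {f \<in> FMS (card b). kern P f = b}" for b
  have fS: "finite (S b)" for b unfolding S_def by (rule finite_subset[OF _ finite_FMS[of "card b"]]) auto
  have "(\<Sum>b\<in>Orp P word_le. (-1) ^ (card b - 1) * real (part_fact P word_le b) / real (card b) * (\<Prod>B\<in>b. mom B))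
      = (\<Sum>b\<in>Orp P word_le. \<Sum>f\<in>S b. G (card b) f)"
  proof (rule sum.cong[OF refl])
    fix b assume b: "b \<in> Orp P word_le"
    have "(\<Sum>f\<in>S b. G (card b) f) = (\<Sum>f\<in>S b. (-1) ^ (card b - 1) / real (card b) * (\<Prod>B\<in>b. mom B))"
    proof (rule sum.cong[OF refl])
      fix f assume f: "f \<in> S b"
      then have "f \<in> FMS (card b)" "kern P f = b" by (auto simp: S_def)
      then show "G (card b) f = (-1) ^ (card b - 1) / real (card b) * (\<Prod>B\<in>b. mom B)"
        using FMS_kern(2)[of f "card b" mom] by (simp add: G_def)
    qed
    also have "\<dots> = real (card (S b)) * ((-1) ^ (card b - 1) / real (card b) * (\<Prod>B\<in>b. mom B))"
      by simp
    finally show "(-1) ^ (card b - 1) * real (part_fact P word_le b) / real (card b) * (\<Prod>B\<in>b. mom B)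
        = (\<Sum>f\<in>S b. G (card b) f)" by (simp add: part_fact_eq S_def)
  qed
  also have "\<dots> = (\<Sum>t\<in>Sigma (Orp P word_le) S. G (card (fst t)) (snd t))"
    using finite_Orp fS by (simp add: sum.Sigma split_def)
  also have "\<dots> = (\<Sum>s\<in>Sigma {1..card P} FMS. G (fst s) (snd s))"
  proof (rule sum.reindex_bij_witness[where j = "\<lambda>t. (card (fst t), snd t)" and i = "\<lambda>s. (kern P (snd s), snd s)"])
    fix t assume "t \<in> Sigma (Orp P word_le) S"
    then obtain b f where t: "t = (b, f)" "f \<in> FMS (card b)" "kern P f = b" by (auto simp: S_def)
    show "(kern P (snd (card (fst t), snd t)), snd (card (fst t), snd t)) = t" using t by simp
    have "card b \<ge> 1"
    proof -
      have "card (f ` P) \<noteq> 0" using P_ne finP by simp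
      then show ?thesis using t(3) card_kern[of P f] by simp
    qed
    moreover have "card b \<le> card P" using t(3) card_kern[of P f] card_image_le[OF finP, of f] by simp
    ultimately show "(card (fst t), snd t) \<in> Sigma {1..card P} FMS" using t by simp
  next
    fix s assume "s \<in> Sigma {1..card P} FMS"
    then obtain m f where s: "s = (m, f)" "f \<in> FMS m" by auto
    show "(card (fst (kern P (snd s), snd s)), snd (kern P (snd s), snd s)) = s"
      using s FMS_kern(1) by simp
    show "(kern P (snd s), snd s) \<in> Sigma (Orp P word_le) S"
      using s FMS_kern(1,3)[of f m] by (simp add: S_def)
  qed simp
  also have "\<dots> = (\<Sum>m\<in>{1..card P}. \<Sum>f\<in>FMS m. G m f)"
    using finite_FMS by (simp add: sum.Sigma split_def)
  also have "\<dots> = (\<Sum>n<card P. \<Sum>f\<in>FMS (Suc n). G (Suc n) f)"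
    by (simp only: One_nat_def sum.atLeast1_atMost_eq)
  finally show ?thesis by (simp add: G_def)
qed

end

definition cumE :: "('i set \<Rightarrow> real) \<Rightarrow> 'i set \<Rightarrow> real" where
  "cumE E A = (\<Sum>\<sigma>\<in>{\<sigma>. partition_on A \<sigma>}. (-1) ^ (card \<sigma> - 1) * fact (card \<sigma> - 1) * (\<Prod>C\<in>\<sigma>. E C))"

lemma part_insert:
  assumes "partition_on (J - B) \<pi>" "B \<subseteq> J" "B \<noteq> {}"
  shows "partition_on J (insert B \<pi>)" "B \<notin> \<pi>"
proof -
  have u: "\<Union>\<pi> = J - B" using assms(1) by (simp add: partition_on_def)
  then have "disjnt B (\<Union>\<pi>)" by (auto simp: disjnt_def)
  then show "partition_on J (insert B \<pi>)"
    using assms by (simp add: partition_on_insert)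
  show "B \<notin> \<pi>"
  proof
    assume "B \<in> \<pi>" then have "B \<subseteq> J - B" using u by blast
    then show False using assms(3) by blast
  qed
qed

lemma part_remove:
  assumes "partition_on J \<tau>" "D \<in> \<tau>"
  shows "partition_on (J - D) (\<tau> - {D})"
proof -
  have "disjnt D (\<Union>(\<tau> - {D}))"
    using assms partition_onD2[OF assms(1)] by (auto simp: disjnt_def pairwise_def disjoint_def)
  moreover have "insert D (\<tau> - {D}) = \<tau>" using assms(2) by blast
  ultimately show ?thesis using assms(1) partition_on_insert[of D "\<tau> - {D}" J] by simp
qed

lemma part_block_unique:
  assumes "partition_on J \<tau>" "A \<in> \<tau>" "B \<in> \<tau>" "x \<in> A" "x \<in> B"
  shows "A = B"
  using assms partition_onD2[OF assms(1)] unfolding disjoint_def by blast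

lemma part_finite_blocks: "finite J \<Longrightarrow> partition_on J \<tau> \<Longrightarrow> C \<in> \<tau> \<Longrightarrow> C \<subseteq> J"
  by (auto simp: partition_on_def)

lemma split_part:
  fixes h :: "'i set \<Rightarrow> real"
  assumes fJ: "finite J" and xJ: "x \<in> J"
  shows "(\<Sum>\<pi>\<in>{\<pi>. partition_on J \<pi>}. \<Prod>A\<in>\<pi>. h A)
       = (\<Sum>A\<in>{A. A \<subseteq> J \<and> x \<in> A}. h A * (\<Sum>\<pi>\<in>{\<pi>. partition_on (J - A) \<pi>}. \<Prod>B\<in>\<pi>. h B))"
proof -
  define blk where "blk \<pi> = (THE A. A \<in> \<pi> \<and> x \<in> A)" for \<pi>
  have blk: "blk \<pi> \<in> \<pi> \<and> x \<in> blk \<pi>" if "partition_on J \<pi>" for \<pi>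
  proof -
    have "x \<in> \<Union>\<pi>" using that xJ by (simp add: partition_on_def)
    then obtain A where A: "A \<in> \<pi>" "x \<in> A" by blast
    have "blk \<pi> = A" unfolding blk_def
      by (rule the_equality) (use A part_block_unique[OF that] in blast)+
    then show ?thesis using A by simp
  qed
  have fin: "finite {A. A \<subseteq> J \<and> x \<in> A}" using fJ by simp
  have finP: "finite {\<pi>. partition_on (J - A) \<pi>}" for A using fJ by (intro finitely_many_partition_on) simp
  have "(\<Sum>A\<in>{A. A \<subseteq> J \<and> x \<in> A}. h A * (\<Sum>\<pi>\<in>{\<pi>. partition_on (J - A) \<pi>}. \<Prod>B\<in>\<pi>. h B))
      = (\<Sum>t\<in>Sigma {A. A \<subseteq> J \<and> x \<in> A} (\<lambda>A. {\<pi>. partition_on (J - A) \<pi>}). h (fst t) * (\<Prod>B\<in>snd t. h B))"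
    using fin finP by (simp add: sum_distrib_left sum.Sigma split_def)
  also have "\<dots> = (\<Sum>\<pi>\<in>{\<pi>. partition_on J \<pi>}. \<Prod>A\<in>\<pi>. h A)"
  proof (rule sum.reindex_bij_witness[where j = "\<lambda>t. insert (fst t) (snd t)" and i = "\<lambda>\<pi>. (blk \<pi>, \<pi> - {blk \<pi>})"])
    fix t assume t: "t \<in> Sigma {A. A \<subseteq> J \<and> x \<in> A} (\<lambda>A. {\<pi>. partition_on (J - A) \<pi>})"
    then obtain A \<pi> where tA: "t = (A, \<pi>)" "A \<subseteq> J" "x \<in> A" "partition_on (J - A) \<pi>" by auto
    have ne: "A \<noteq> {}" using tA by blast
    have pJ: "partition_on J (insert A \<pi>)" and An: "A \<notin> \<pi>" using part_insert[OF tA(4) tA(2) ne] by auto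
    have "blk (insert A \<pi>) = A"
      using blk[OF pJ] part_block_unique[OF pJ, of "blk (insert A \<pi>)" A x] tA(3) by blast
    then show "(blk (insert (fst t) (snd t)), insert (fst t) (snd t) - {blk (insert (fst t) (snd t))}) = t"
      using tA An by auto
    show "insert (fst t) (snd t) \<in> {\<pi>. partition_on J \<pi>}" using pJ tA by simp
    have "finite \<pi>" using finite_elements[OF _ tA(4)] fJ by simp
    then show "(\<Prod>B\<in>insert (fst t) (snd t). h B) = h (fst t) * (\<Prod>B\<in>snd t. h B)"
      using tA An by simp
  next
    fix \<pi> assume "\<pi> \<in> {\<pi>. partition_on J \<pi>}"
    then have p: "partition_on J \<pi>" by simp
    show "insert (fst (blk \<pi>, \<pi> - {blk \<pi>})) (snd (blk \<pi>, \<pi> - {blk \<pi>})) = \<pi>" using blk[OF p] by auto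
    have "blk \<pi> \<subseteq> J" using blk[OF p] p by (auto simp: partition_on_def)
    then show "(blk \<pi>, \<pi> - {blk \<pi>}) \<in> Sigma {A. A \<subseteq> J \<and> x \<in> A} (\<lambda>A. {\<pi>. partition_on (J - A) \<pi>})"
      using blk[OF p] part_remove[OF p, of "blk \<pi>"] by simp
  qed
  finally show ?thesis by simp
qed

lemma mu_coef:
  assumes "n \<ge> 1"
  shows "(-1) ^ (n - 1) * fact (n - 1) + real (n - 1) * ((-1) ^ (n - 1 - 1) * fact (n - 1 - 1))
       = (if n = 1 then 1 else (0::real))"
proof (cases "n = 1")
  case True then show ?thesis by simp
next
  case False
  then obtain k where n: "n = Suc (Suc k)" using assms by (cases n; cases "n - 1") auto
  have "(-1::real) ^ Suc k * fact (Suc k) + real (Suc k) * ((-1) ^ k * fact k) = 0"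
    by (simp add: fact_Suc algebra_simps)
  then show ?thesis using n by simp
qed

lemma card_not_x:
  assumes "partition_on J \<tau>" "x \<in> J" "finite J"
  shows "card {D\<in>\<tau>. x \<notin> D} = card \<tau> - 1"
proof -
  have "x \<in> \<Union>\<tau>" using assms by (simp add: partition_on_def)
  then obtain B where B: "B \<in> \<tau>" "x \<in> B" by blast
  have "{D\<in>\<tau>. x \<notin> D} = \<tau> - {B}" using part_block_unique[OF assms(1) B(1)] B by blast
  moreover have "finite \<tau>" using finite_elements[OF assms(3,1)] .
  ultimately show ?thesis using B by simp
qed

lemma ID_part:
  fixes E :: "'i set \<Rightarrow> real"
  assumes fJ: "finite J" and xJ: "x \<in> J"
  shows "(\<Sum>A\<in>{A. A \<subseteq> J \<and> x \<in> A}. cumE E A * (if J - A = {} then 1 else E (J - A))) = E J"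
proof -
  define mu :: "nat \<Rightarrow> real" where "mu n = (-1) ^ (n - 1) * fact (n - 1)" for n
  define SA where "SA = {A. A \<subseteq> J \<and> x \<in> A \<and> A \<noteq> J}"
  define PJ where "PJ = {\<tau>. partition_on J \<tau>}"
  have fPJ: "finite PJ" unfolding PJ_def using fJ by (rule finitely_many_partition_on)
  have fSA: "finite SA" unfolding SA_def using fJ by simp
  have finP: "finite {\<pi>. partition_on A \<pi>}" if "A \<subseteq> J" for A
    using finite_subset[OF that fJ] by (rule finitely_many_partition_on)
  have fblocks: "finite \<tau>" if "partition_on A \<tau>" "A \<subseteq> J" for A \<tau>
    using finite_elements[OF finite_subset[OF that(2) fJ] that(1)] .
  have cJ: "cumE E J = (\<Sum>\<tau>\<in>PJ. mu (card \<tau>) * (\<Prod>C\<in>\<tau>. E C))"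
    unfolding cumE_def PJ_def mu_def by simp
  have split: "{A. A \<subseteq> J \<and> x \<in> A} = insert J SA" "J \<notin> SA" using xJ by (auto simp: SA_def)
  have "(\<Sum>A\<in>{A. A \<subseteq> J \<and> x \<in> A}. cumE E A * (if J - A = {} then 1 else E (J - A)))
      = cumE E J + (\<Sum>A\<in>SA. cumE E A * E (J - A))"
  proof -
    have "(\<Sum>A\<in>SA. cumE E A * (if J - A = {} then 1 else E (J - A))) = (\<Sum>A\<in>SA. cumE E A * E (J - A))"
      by (rule sum.cong[OF refl]) (auto simp: SA_def)
    then show ?thesis unfolding split(1) using fSA split(2) by simp
  qed
  also have "(\<Sum>A\<in>SA. cumE E A * E (J - A))
      = (\<Sum>t\<in>Sigma SA (\<lambda>A. {\<sigma>. partition_on A \<sigma>}). mu (card (snd t)) * (\<Prod>C\<in>snd t. E C) * E (J - fst t))"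
    unfolding cumE_def mu_def using fSA finP
    by (simp add: sum_distrib_right sum.Sigma split_def SA_def)
  also have "\<dots> = (\<Sum>u\<in>Sigma PJ (\<lambda>\<tau>. {D\<in>\<tau>. x \<notin> D}). mu (card (fst u) - 1) * (\<Prod>C\<in>fst u. E C))"
  proof (rule sum.reindex_bij_witness[where j = "\<lambda>t. (insert (J - fst t) (snd t), J - fst t)"
        and i = "\<lambda>u. (J - snd u, fst u - {snd u})"])
    fix t assume "t \<in> Sigma SA (\<lambda>A. {\<sigma>. partition_on A \<sigma>})"
    then obtain A \<sigma> where t: "t = (A, \<sigma>)" "A \<subseteq> J" "x \<in> A" "A \<noteq> J" "partition_on A \<sigma>"
      by (auto simp: SA_def)
    have JJA: "J - (J - A) = A" using t(2) by blast
    have p1: "partition_on (J - (J - A)) \<sigma>" using t(5) JJA by simp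
    have ne: "J - A \<noteq> {}" using t(2,4) by blast
    note pi = part_insert[OF p1 _ ne]
    show "(J - snd (insert (J - fst t) (snd t), J - fst t),
           fst (insert (J - fst t) (snd t), J - fst t) - {snd (insert (J - fst t) (snd t), J - fst t)}) = t"
      using t pi(2) JJA by auto
    show "(insert (J - fst t) (snd t), J - fst t) \<in> Sigma PJ (\<lambda>\<tau>. {D\<in>\<tau>. x \<notin> D})"
      using t pi(1) by (auto simp: PJ_def)
    have fs: "finite \<sigma>" using fblocks[OF t(5) t(2)] .
    show "mu (card (fst (insert (J - fst t) (snd t), J - fst t)) - 1)
            * (\<Prod>C\<in>fst (insert (J - fst t) (snd t), J - fst t). E C)
          = mu (card (snd t)) * (\<Prod>C\<in>snd t. E C) * E (J - fst t)"
      using t fs pi(2) by (simp add: algebra_simps)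
  next
    fix u assume "u \<in> Sigma PJ (\<lambda>\<tau>. {D\<in>\<tau>. x \<notin> D})"
    then obtain \<tau> D where u: "u = (\<tau>, D)" "partition_on J \<tau>" "D \<in> \<tau>" "x \<notin> D"
      by (auto simp: PJ_def)
    have DJ: "D \<subseteq> J" "D \<noteq> {}" using u(2,3) by (auto simp: partition_on_def)
    show "(insert (J - fst (J - snd u, fst u - {snd u})) (snd (J - snd u, fst u - {snd u})),
           J - fst (J - snd u, fst u - {snd u})) = u"
      using u DJ by (simp add: Diff_Diff_Int inf.absorb2 insert_absorb)
    have "partition_on (J - D) (\<tau> - {D})" by (rule part_remove[OF u(2,3)])
    moreover have "J - D \<noteq> J" using DJ by blast
    ultimately show "(J - snd u, fst u - {snd u}) \<in> Sigma SA (\<lambda>A. {\<sigma>. partition_on A \<sigma>})"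
      using u xJ by (auto simp: SA_def)
  qed
  also have "\<dots> = (\<Sum>\<tau>\<in>PJ. real (card \<tau> - 1) * mu (card \<tau> - 1) * (\<Prod>C\<in>\<tau>. E C))"
  proof -
    have "(\<Sum>u\<in>Sigma PJ (\<lambda>\<tau>. {D\<in>\<tau>. x \<notin> D}). mu (card (fst u) - 1) * (\<Prod>C\<in>fst u. E C))
        = (\<Sum>\<tau>\<in>PJ. \<Sum>D\<in>{D\<in>\<tau>. x \<notin> D}. mu (card \<tau> - 1) * (\<Prod>C\<in>\<tau>. E C))"
    proof -
      have "\<forall>\<tau>\<in>PJ. finite {D\<in>\<tau>. x \<notin> D}" using fblocks by (auto simp: PJ_def)
      then have "(\<Sum>\<tau>\<in>PJ. \<Sum>D\<in>{D\<in>\<tau>. x \<notin> D}. mu (card \<tau> - 1) * (\<Prod>C\<in>\<tau>. E C))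
          = (\<Sum>u\<in>Sigma PJ (\<lambda>\<tau>. {D\<in>\<tau>. x \<notin> D}). mu (card (fst u) - 1) * (\<Prod>C\<in>fst u. E C))"
        using fPJ by (subst sum.Sigma) (auto simp: split_def)
      then show ?thesis by simp
    qed
    also have "\<dots> = (\<Sum>\<tau>\<in>PJ. real (card \<tau> - 1) * mu (card \<tau> - 1) * (\<Prod>C\<in>\<tau>. E C))"
      by (rule sum.cong[OF refl]) (simp add: card_not_x[OF _ xJ fJ] PJ_def)
    finally show ?thesis .
  qed
  finally have "(\<Sum>A\<in>{A. A \<subseteq> J \<and> x \<in> A}. cumE E A * (if J - A = {} then 1 else E (J - A)))
      = (\<Sum>\<tau>\<in>PJ. (mu (card \<tau>) + real (card \<tau> - 1) * mu (card \<tau> - 1)) * (\<Prod>C\<in>\<tau>. E C))"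
    unfolding cJ by (simp add: sum.distrib algebra_simps)
  also have "\<dots> = (\<Sum>\<tau>\<in>PJ. if card \<tau> = 1 then (\<Prod>C\<in>\<tau>. E C) else 0)"
  proof (rule sum.cong[OF refl])
    fix \<tau> assume "\<tau> \<in> PJ"
    then have p: "partition_on J \<tau>" by (simp add: PJ_def)
    have "card \<tau> \<ge> 1"
    proof -
      have "\<tau> \<noteq> {}" using p xJ by (auto simp: partition_on_def)
      then show ?thesis using fblocks[OF p] by (simp add: Suc_le_eq card_gt_0_iff)
    qed
    then show "(mu (card \<tau>) + real (card \<tau> - 1) * mu (card \<tau> - 1)) * (\<Prod>C\<in>\<tau>. E C)
        = (if card \<tau> = 1 then (\<Prod>C\<in>\<tau>. E C) else 0)"
      using mu_coef[of "card \<tau>"] unfolding mu_def by simp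
  qed
  also have "\<dots> = (\<Sum>\<tau>\<in>{\<tau>\<in>PJ. card \<tau> = 1}. \<Prod>C\<in>\<tau>. E C)"
    by (rule sum.inter_filter[symmetric, OF fPJ])
  also have "{\<tau>\<in>PJ. card \<tau> = 1} = {{J}}"
  proof (intro equalityI subsetI)
    fix \<tau> assume "\<tau> \<in> {\<tau>\<in>PJ. card \<tau> = 1}"
    then obtain C where "\<tau> = {C}" "partition_on J \<tau>" by (auto simp: PJ_def card_Suc_eq)
    then show "\<tau> \<in> {{J}}" by (auto simp: partition_on_def)
  next
    fix \<tau> assume "\<tau> \<in> {{J}}"
    then show "\<tau> \<in> {\<tau>\<in>PJ. card \<tau> = 1}" using xJ by (auto simp: PJ_def intro: partition_on_space)
  qed
  finally show ?thesis by simp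
qed

lemma INV:
  fixes E :: "'i set \<Rightarrow> real"
  assumes "finite J" "J \<noteq> {}"
  shows "(\<Sum>\<pi>\<in>{\<pi>. partition_on J \<pi>}. \<Prod>A\<in>\<pi>. cumE E A) = E J"
  using assms
proof (induction "card J" arbitrary: J rule: less_induct)
  case less
  obtain x where xJ: "x \<in> J" using less.prems by blast
  have "(\<Sum>\<pi>\<in>{\<pi>. partition_on J \<pi>}. \<Prod>A\<in>\<pi>. cumE E A)
      = (\<Sum>A\<in>{A. A \<subseteq> J \<and> x \<in> A}. cumE E A * (\<Sum>\<pi>\<in>{\<pi>. partition_on (J - A) \<pi>}. \<Prod>B\<in>\<pi>. cumE E B))"
    by (rule split_part[OF less.prems(1) xJ])
  also have "\<dots> = (\<Sum>A\<in>{A. A \<subseteq> J \<and> x \<in> A}. cumE E A * (if J - A = {} then 1 else E (J - A)))"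
  proof (rule sum.cong[OF refl])
    fix A assume A: "A \<in> {A. A \<subseteq> J \<and> x \<in> A}"
    show "cumE E A * (\<Sum>\<pi>\<in>{\<pi>. partition_on (J - A) \<pi>}. \<Prod>B\<in>\<pi>. cumE E B)
        = cumE E A * (if J - A = {} then 1 else E (J - A))"
    proof (cases "J - A = {}")
      case True
      have e: "{\<pi>. partition_on {} \<pi>} = {{}}" by (auto simp: partition_on_empty)
      show ?thesis by (simp only: True e if_True) simp
    next
      case False
      have "card (J - A) < card J"
        using A xJ less.prems(1) by (intro psubset_card_mono) auto
      then have "(\<Sum>\<pi>\<in>{\<pi>. partition_on (J - A) \<pi>}. \<Prod>B\<in>\<pi>. cumE E B) = E (J - A)"
        using less.hyps less.prems(1) False by simp
      then show ?thesis using False by simp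
    qed
  qed
  also have "\<dots> = E J" by (rule ID_part[OF less.prems(1) xJ])
  finally show ?case .
qed

lemma jc_cumE: "joint_cumulant M J Y = cumE (\<lambda>C. integral\<^sup>L M (\<lambda>\<omega>. \<Prod>i\<in>C. Y i \<omega>)) J"
  by (simp add: joint_cumulant_def cumE_def)

lemma cumE_cong:
  assumes "\<And>C. C \<subseteq> A \<Longrightarrow> E1 C = E2 C"
  shows "cumE E1 A = cumE E2 A"
  unfolding cumE_def
proof (rule sum.cong[OF refl])
  fix \<sigma> assume "\<sigma> \<in> {\<sigma>. partition_on A \<sigma>}"
  then have "\<And>C. C \<in> \<sigma> \<Longrightarrow> C \<subseteq> A" by (auto simp: partition_on_def)
  then have "(\<Prod>C\<in>\<sigma>. E1 C) = (\<Prod>C\<in>\<sigma>. E2 C)" using assms by (intro prod.cong) auto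
  then show "(-1) ^ (card \<sigma> - 1) * fact (card \<sigma> - 1) * (\<Prod>C\<in>\<sigma>. E1 C)
      = (-1) ^ (card \<sigma> - 1) * fact (card \<sigma> - 1) * (\<Prod>C\<in>\<sigma>. E2 C)" by simp
qed

lemma kern_block:
  assumes "B \<in> kern P g" "x \<in> B"
  shows "x \<in> P" "B = {z\<in>P. g z = g x}"
  using assms by (auto simp: kern_def)

lemma kern_mem: "x \<in> P \<Longrightarrow> {z\<in>P. g z = g x} \<in> kern P g"
  by (auto simp: kern_def)

lemma kern_partition: "partition_on P (kern P g)"
  by (rule partition_onI) (auto simp: kern_def disjnt_def)

context setting
begin

definition merge :: "(nat \<times> nat) set \<Rightarrow> nat set \<Rightarrow> (nat \<times> nat) set" where
  "merge B A = {x\<in>B. fst x \<in> A}"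

definition EB :: "(nat \<times> nat) set \<Rightarrow> nat set \<Rightarrow> real" where
  "EB B C = integral\<^sup>L M (\<lambda>\<omega>. \<Prod>j\<in>C. X \<omega> (0, T) (subword ts B j))"

lemma Orp_part: "a \<in> Orp P word_le \<Longrightarrow> partition_on P a"
  by (auto simp: Orp_def kern_partition)

lemma Jset_sub: "Jset B \<subseteq> {..<length ts}"
  by (auto simp: Jset_def)

lemma finite_Jset: "finite (Jset B)"
  using finite_subset[OF Jset_sub] by simp

lemma Jset_ne: "B \<subseteq> P \<Longrightarrow> B \<noteq> {} \<Longrightarrow> Jset B \<noteq> {}"
  by (auto simp: Jset_def word_poset_def)

lemma Jset_merge: "A \<subseteq> Jset B \<Longrightarrow> Jset (merge B A) = A"
  by (auto simp: Jset_def merge_def)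

lemma subword_merge: "j \<in> A \<Longrightarrow> subword ts (merge B A) j = subword ts B j"
  by (simp add: subword_def merge_def)

lemma mom_INV:
  assumes "B \<subseteq> P" "B \<noteq> {}"
  shows "mom B = (\<Sum>\<pi>\<in>{\<pi>. partition_on (Jset B) \<pi>}. \<Prod>A\<in>\<pi>. cumE (EB B) A)"
  using INV[OF finite_Jset Jset_ne[OF assms], of "EB B"] by (simp add: mom_def EB_def)

lemma gen_cumulant_alt:
  "gen_cumulant M X T ts a = (\<Prod>A\<in>a. joint_cumulant M (Jset A) (\<lambda>j \<omega>. X \<omega> (0, T) (subword ts A j)))"
  by (simp add: gen_cumulant_def Jset_def)

lemma jc_merge:
  assumes "A \<subseteq> Jset B"
  shows "joint_cumulant M (Jset (merge B A)) (\<lambda>j \<omega>. X \<omega> (0, T) (subword ts (merge B A) j)) = cumE (EB B) A"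
  unfolding jc_cumE Jset_merge[OF assms] EB_def
  by (rule cumE_cong) (auto intro!: Bochner_Integration.integral_cong prod.cong simp: subword_merge)

end

context setting
begin

definition PB :: "(nat \<times> nat) set \<Rightarrow> nat set set set" where
  "PB B = {\<pi>. partition_on (Jset B) \<pi>}"

definition Phi :: "(nat \<times> nat) set set \<Rightarrow> ((nat \<times> nat) set \<Rightarrow> nat set set) \<Rightarrow> (nat \<times> nat) set set" where
  "Phi b Ch = (\<Union>B\<in>b. merge B ` Ch B)"

lemma divmod_eq:
  fixes K a b r s :: nat
  assumes "r < K" "s < K"
  shows "a * K + r = b * K + s \<longleftrightarrow> a = b \<and> r = s"
proof
  assume h: "a * K + r = b * K + s"
  have "(a * K + r) div K = a" "(a * K + r) mod K = r" using assms(1) by auto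
  moreover have "(b * K + s) div K = b" "(b * K + s) mod K = s" using assms(2) by auto
  ultimately show "a = b \<and> r = s" using h by metis
qed simp

lemma Phi_Orp:
  assumes bg: "b = kern P g" and gop: "order_pres P word_le g" and Ch: "Ch \<in> PiE b PB"
  shows "Phi b Ch \<in> Orp P word_le"
proof -
  define K where "K = length ts"
  define blkx where "blkx x = {z\<in>P. g z = g x}" for x
  have ChB: "partition_on (Jset B) (Ch B)" if "B \<in> b" for B
    using PiE_mem[OF Ch that] by (simp add: PB_def)
  have blk_in: "blkx x \<in> b" "x \<in> blkx x" if "x \<in> P" for x
    using that kern_mem[OF that, of g] by (auto simp: bg blkx_def)
  have fst_in: "fst x \<in> Jset (blkx x)" if "x \<in> P" for x
  proof -
    have "(fst x, snd x) \<in> blkx x" using blk_in(2)[OF that] by simp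
    moreover have "fst x < length ts" using that by (rule fstP)
    ultimately show ?thesis unfolding Jset_def by blast
  qed
  define Ax where "Ax x = (THE A. A \<in> Ch (blkx x) \<and> fst x \<in> A)" for x
  have Ax_uniq: "Ax x = A" if "x \<in> P" "A \<in> Ch (blkx x)" "fst x \<in> A" for x A
    unfolding Ax_def
  proof (rule the_equality)
    show "A \<in> Ch (blkx x) \<and> fst x \<in> A" using that by simp
    fix A' assume "A' \<in> Ch (blkx x) \<and> fst x \<in> A'"
    then show "A' = A" using part_block_unique[OF ChB[OF blk_in(1)[OF that(1)]]] that by blast
  qed
  have Ax_prop: "Ax x \<in> Ch (blkx x) \<and> fst x \<in> Ax x" if "x \<in> P" for x
  proof -
    have "fst x \<in> \<Union>(Ch (blkx x))" using fst_in[OF that] ChB[OF blk_in(1)[OF that]]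
      by (simp add: partition_on_def)
    then obtain A where "A \<in> Ch (blkx x)" "fst x \<in> A" by blast
    then show ?thesis using Ax_uniq[OF that] by simp
  qed
  have Ax_sub: "Ax x \<subseteq> {..<K}" if "x \<in> P" for x
  proof -
    have "Ax x \<subseteq> Jset (blkx x)" using Ax_prop[OF that] ChB[OF blk_in(1)[OF that]]
      by (auto simp: partition_on_def)
    then show ?thesis using Jset_sub unfolding K_def by blast
  qed
  have MinAx: "Min (Ax x) < K" "Min (Ax x) \<in> Ax x" if "x \<in> P" for x
  proof -
    have "finite (Ax x)" using Ax_sub[OF that] finite_subset by blast
    moreover have "Ax x \<noteq> {}" using Ax_prop[OF that] by blast
    ultimately show "Min (Ax x) \<in> Ax x" by simp
    then show "Min (Ax x) < K" using Ax_sub[OF that] by blast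
  qed
  define h where "h x = g x * K + Min (Ax x)" for x
  have blk_eq: "blkx z = blkx x" if "g z = g x" for x z using that by (simp add: blkx_def)
  have same: "Min (Ax z) = Min (Ax x) \<longleftrightarrow> fst z \<in> Ax x"
    if "x \<in> P" "z \<in> P" "g z = g x" for x z
  proof
    assume m: "Min (Ax z) = Min (Ax x)"
    have "Ax z \<in> Ch (blkx x)" using Ax_prop[OF that(2)] blk_eq[OF that(3)] by simp
    moreover have "Ax x \<in> Ch (blkx x)" using Ax_prop[OF that(1)] by simp
    ultimately have "Ax z = Ax x"
      using part_block_unique[OF ChB[OF blk_in(1)[OF that(1)]], of "Ax z" "Ax x" "Min (Ax x)"]
        MinAx(2)[OF that(1)] MinAx(2)[OF that(2)] m by simp
    then show "fst z \<in> Ax x" using Ax_prop[OF that(2)] by simp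
  next
    assume f: "fst z \<in> Ax x"
    have "Ax z = Ax x" using Ax_uniq[OF that(2), of "Ax x"] Ax_prop[OF that(1)] blk_eq[OF that(3)] f by simp
    then show "Min (Ax z) = Min (Ax x)" by simp
  qed
  have h_eq: "h z = h x \<longleftrightarrow> g z = g x \<and> Min (Ax z) = Min (Ax x)" if "x \<in> P" "z \<in> P" for x z
    unfolding h_def using divmod_eq[OF MinAx(1)[OF that(2)] MinAx(1)[OF that(1)]] by simp
  have hop: "order_pres P word_le h"
    unfolding order_pres_def
  proof (intro ballI impI)
    fix x z assume x: "x \<in> P" and z: "z \<in> P" and xz: "word_le x z"
    have gxz: "g x \<le> g z" using gop x z xz by (auto simp: order_pres_def)
    show "h x \<le> h z"
    proof (cases "g x = g z")
      case True
      have "fst x = fst z" using xz by (simp add: word_le_def)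
      then have "fst z \<in> Ax x" using Ax_prop[OF x] by simp
      then have "h z = h x" using h_eq[OF x z] same[OF x z] True by simp
      then show ?thesis by simp
    next
      case False
      then have "g x + 1 \<le> g z" using gxz by simp
      then have "(g x + 1) * K \<le> g z * K" by (rule mult_right_mono) simp
      then show ?thesis using MinAx(1)[OF x] unfolding h_def by (simp add: algebra_simps)
    qed
  qed
  have cls: "{z\<in>P. h z = h x} = merge (blkx x) (Ax x)" if x: "x \<in> P" for x
  proof (intro equalityI subsetI)
    fix z assume "z \<in> {z\<in>P. h z = h x}"
    then have z: "z \<in> P" "h z = h x" by auto
    then have "g z = g x" "fst z \<in> Ax x" using h_eq[OF x z(1)] same[OF x z(1)] by auto
    then show "z \<in> merge (blkx x) (Ax x)" using z by (simp add: merge_def blkx_def)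
  next
    fix z assume "z \<in> merge (blkx x) (Ax x)"
    then have z: "z \<in> P" "g z = g x" "fst z \<in> Ax x" by (auto simp: merge_def blkx_def)
    then show "z \<in> {z\<in>P. h z = h x}" using h_eq[OF x z(1)] same[OF x z(1)] by auto
  qed
  have "kern P h = Phi b Ch"
  proof (intro equalityI subsetI)
    fix C assume "C \<in> kern P h"
    then obtain x where x: "x \<in> P" "C = {z\<in>P. h z = h x}" by (auto simp: kern_alt)
    then show "C \<in> Phi b Ch" unfolding Phi_def using cls[OF x(1)] blk_in(1)[OF x(1)] Ax_prop[OF x(1)] by blast
  next
    fix C assume "C \<in> Phi b Ch"
    then obtain B A where BA: "B \<in> b" "A \<in> Ch B" "C = merge B A" by (auto simp: Phi_def)
    have "A \<noteq> {}" "A \<subseteq> Jset B" using ChB[OF BA(1)] BA(2) by (auto simp: partition_on_def)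
    then obtain j where j: "j \<in> A" "j \<in> Jset B" by blast
    then obtain q where q: "(j, q) \<in> B" by (auto simp: Jset_def)
    define x where "x = (j, q)"
    have xP: "x \<in> P" using kern_block(1)[of B P g x] BA(1) q bg x_def by simp
    have "B = blkx x" using kern_block(2)[of B P g x] BA(1) q bg x_def by (simp add: blkx_def)
    moreover have "Ax x = A" using Ax_uniq[OF xP, of A] BA(2) \<open>B = blkx x\<close> j(1) x_def by simp
    ultimately have "C = {z\<in>P. h z = h x}" using cls[OF xP] BA(3) by simp
    then show "C \<in> kern P h" using xP by (auto simp: kern_alt)
  qed
  then show ?thesis using hop unfolding Orp_def by blast
qed

end

context setting
begin

lemma Cw_chain: "is_chain P word_le {x\<in>P. fst x = j}"
  by (auto simp: is_chain_def word_le_def)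

lemma chain_fst:
  assumes "is_chain P word_le C" "x \<in> C" "y \<in> C" shows "fst x = fst y"
proof -
  have "word_le x y \<or> word_le y x" using assms unfolding is_chain_def by blast
  then show ?thesis unfolding word_le_def by auto
qed

lemma Orp_blocks:
  assumes "b \<in> Orp P word_le" "B \<in> b"
  shows "B \<subseteq> P" "B \<noteq> {}" "finite B"
proof -
  have p: "partition_on P b" using Orp_part[OF assms(1)] .
  show "B \<subseteq> P" "B \<noteq> {}" using p assms(2) by (auto simp: partition_on_def)
  then show "finite B" using finite_subset finP by blast
qed

lemma Orp_finite: "b \<in> Orp P word_le \<Longrightarrow> finite b"
  using finite_elements[OF finP Orp_part] .

lemma Orp_uniq: "b \<in> Orp P word_le \<Longrightarrow> B \<in> b \<Longrightarrow> B' \<in> b \<Longrightarrow> x \<in> B \<Longrightarrow> x \<in> B' \<Longrightarrow> B = B'"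
  using part_block_unique[OF Orp_part] by blast

lemma Orp_cover: "b \<in> Orp P word_le \<Longrightarrow> x \<in> P \<Longrightarrow> \<exists>B\<in>b. x \<in> B"
  using Orp_part[of b] by (auto simp: partition_on_def)

lemma K_lemma:
  assumes a: "a \<in> Orp P word_le" and ba: "b \<in> Aset P word_le a"
    and A': "A' \<in> a" and B: "B \<in> b" and sub: "A' \<subseteq> B"
  shows "A' = merge B (Jset A')"
proof (intro equalityI subsetI)
  fix x assume x: "x \<in> A'"
  have "x \<in> P" using Orp_blocks(1)[OF a A'] x by blast
  obtain j q where xjq: "x = (j, q)" by (cases x)
  have "j < length ts" using fstP[OF \<open>x \<in> P\<close>] xjq by simp
  then have "fst x \<in> Jset A'" unfolding Jset_def using xjq x by auto
  moreover have "x \<in> B" using x sub by blast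
  ultimately show "x \<in> merge B (Jset A')" by (simp add: merge_def)
next
  fix x assume "x \<in> merge B (Jset A')"
  then have xB: "x \<in> B" and j: "fst x \<in> Jset A'" by (auto simp: merge_def)
  have b: "b \<in> Orp P word_le" and cc: "\<forall>C. is_chain P word_le C \<longrightarrow> restr_part b C = restr_part a C"
    using ba unfolding Aset_def by blast+
  obtain q where yA: "(fst x, q) \<in> A'" using j by (auto simp: Jset_def)
  define y where "y = (fst x, q)"
  define C where "C = {z\<in>P. fst z = fst x}"
  have yA': "y \<in> A'" unfolding y_def by (rule yA)
  have yP: "y \<in> P" using Orp_blocks(1)[OF a A'] yA' by blast
  have xP: "x \<in> P" using Orp_blocks(1)[OF b B] xB by blast
  have "y \<in> A' \<inter> C" using yA yP unfolding y_def C_def by simp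
  then have "A' \<inter> C \<in> restr_part a C" unfolding restr_part_def using A' by blast
  then have "A' \<inter> C \<in> restr_part b C" using cc[rule_format, OF Cw_chain[of "fst x"]] unfolding C_def by simp
  then obtain B' where B': "B' \<in> b" "A' \<inter> C = B' \<inter> C" by (auto simp: restr_part_def)
  have "y \<in> B'" using B'(2) \<open>y \<in> A' \<inter> C\<close> by blast
  moreover have "y \<in> B" using sub yA' by blast
  ultimately have "B' = B" using Orp_uniq[OF b B'(1) B] by blast
  moreover have "x \<in> C" using xP unfolding C_def by simp
  ultimately have "x \<in> A' \<inter> C" using B'(2) xB by blast
  then show "x \<in> A'" by blast
qed

lemma Phi_Aset:
  assumes b: "b \<in> Orp P word_le" and Ch: "Ch \<in> PiE b PB"
  shows "b \<in> Aset P word_le (Phi b Ch)"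
proof -
  have ChB: "partition_on (Jset B) (Ch B)" if "B \<in> b" for B
    using PiE_mem[OF Ch that] by (simp add: PB_def)
  have ref: "refines (Phi b Ch) b" unfolding refines_def Phi_def merge_def by blast
  have cc: "restr_part b C = restr_part (Phi b Ch) C" if C: "is_chain P word_le C" for C
  proof (cases "C = {}")
    case True then show ?thesis by (auto simp: restr_part_def)
  next
    case False
    then obtain c0 where c0: "c0 \<in> C" by blast
    define j where "j = fst c0"
    have fC: "\<And>x. x \<in> C \<Longrightarrow> fst x = j" using chain_fst[OF C _ c0] j_def by blast
    have CP: "C \<subseteq> P" using C by (simp add: is_chain_def)
    have mc: "merge B A \<inter> C = (if j \<in> A then B \<inter> C else {})" for B A
      using fC by (auto simp: merge_def)
    show ?thesis
    proof (intro equalityI subsetI)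
      fix D assume "D \<in> restr_part b C"
      then obtain B where B: "B \<in> b" "D = B \<inter> C" "D \<noteq> {}" by (auto simp: restr_part_def)
      then obtain x where x: "x \<in> B" "x \<in> C" by blast
      have "x \<in> P" using x CP by blast
      then have "fst x \<in> Jset B" using x fstP unfolding Jset_def by (cases x) auto
      then have "j \<in> \<Union>(Ch B)" using ChB[OF B(1)] fC[OF x(2)] by (simp add: partition_on_def)
      then obtain A where A: "A \<in> Ch B" "j \<in> A" by blast
      have "merge B A \<in> Phi b Ch" unfolding Phi_def using B(1) A(1) by blast
      moreover have "D = merge B A \<inter> C" using mc A(2) B(2) by simp
      ultimately show "D \<in> restr_part (Phi b Ch) C" using B(3) unfolding restr_part_def by blast
    next
      fix D assume "D \<in> restr_part (Phi b Ch) C"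
      then obtain B A where BA: "B \<in> b" "A \<in> Ch B" "D = merge B A \<inter> C" "D \<noteq> {}"
        by (auto simp: restr_part_def Phi_def)
      then have "j \<in> A" using mc by (cases "j \<in> A") auto
      then have "D = B \<inter> C" using mc BA(3) by simp
      then show "D \<in> restr_part b C" using BA(1,4) unfolding restr_part_def by blast
    qed
  qed
  show ?thesis using b ref cc unfolding Aset_def by auto
qed

lemma Phi_in_Orp:
  assumes b: "b \<in> Orp P word_le" and Ch: "Ch \<in> PiE b PB"
  shows "Phi b Ch \<in> Orp P word_le"
proof -
  obtain g where g: "b = kern P g" "order_pres P word_le g" using b by (auto simp: Orp_def)
  show ?thesis by (rule Phi_Orp[OF g Ch])
qed

definition Psi :: "(nat \<times> nat) set set \<Rightarrow> (nat \<times> nat) set set \<Rightarrow> (nat \<times> nat) set \<Rightarrow> nat set set" where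
  "Psi b a = (\<lambda>B\<in>b. Jset ` {A'\<in>a. A' \<subseteq> B})"

lemma Psi_PiE:
  assumes a: "a \<in> Orp P word_le" and ba: "b \<in> Aset P word_le a"
  shows "Psi b a \<in> PiE b PB"
proof -
  have b: "b \<in> Orp P word_le" and ref: "refines a b" using ba by (auto simp: Aset_def)
  have "partition_on (Jset B) (Jset ` {A'\<in>a. A' \<subseteq> B})" if B: "B \<in> b" for B
  proof (rule partition_onI)
    show "\<Union>(Jset ` {A'\<in>a. A' \<subseteq> B}) = Jset B"
    proof (intro equalityI subsetI)
      fix j assume "j \<in> \<Union>(Jset ` {A'\<in>a. A' \<subseteq> B})"
      then show "j \<in> Jset B" by (auto simp: Jset_def)
    next
      fix j assume "j \<in> Jset B"
      then obtain q where q: "(j, q) \<in> B" "j < length ts" by (auto simp: Jset_def)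
      then have "(j, q) \<in> P" using Orp_blocks(1)[OF b B] by blast
      then obtain A' where A': "A' \<in> a" "(j, q) \<in> A'" using Orp_cover[OF a] by blast
      obtain B'' where B'': "B'' \<in> b" "A' \<subseteq> B''" using ref A'(1) by (auto simp: refines_def)
      have "B'' = B" using Orp_uniq[OF b B''(1) B] A'(2) B''(2) q(1) by blast
      moreover have "j \<in> Jset A'" using A'(2) q(2) by (auto simp: Jset_def)
      ultimately show "j \<in> \<Union>(Jset ` {A'\<in>a. A' \<subseteq> B})" using A' B'' by blast
    qed
  next
    fix p q assume "p \<in> Jset ` {A'\<in>a. A' \<subseteq> B}" "q \<in> Jset ` {A'\<in>a. A' \<subseteq> B}" "p \<noteq> q"
    then obtain A1 A2 where A: "A1 \<in> a" "A1 \<subseteq> B" "p = Jset A1" "A2 \<in> a" "A2 \<subseteq> B" "q = Jset A2" by blast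
    show "disjnt p q"
    proof (rule ccontr)
      assume "\<not> disjnt p q"
      then obtain j where j: "j \<in> Jset A1" "j \<in> Jset A2" using A by (auto simp: disjnt_def)
      then obtain q1 where q1: "(j, q1) \<in> A1" by (auto simp: Jset_def)
      have "(j, q1) \<in> merge B (Jset A2)" using q1 A(2) j(2) by (auto simp: merge_def)
      then have "(j, q1) \<in> A2" using K_lemma[OF a ba A(4) B A(5)] by simp
      then have "A1 = A2" using Orp_uniq[OF a A(1) A(4) q1] by simp
      then show False using A \<open>p \<noteq> q\<close> by simp
    qed
  next
    show "{} \<notin> Jset ` {A'\<in>a. A' \<subseteq> B}"
    proof
      assume "{} \<in> Jset ` {A'\<in>a. A' \<subseteq> B}"
      then obtain A' where A': "A' \<in> a" "Jset A' = {}" by auto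
      then show False using Jset_ne[OF Orp_blocks(1,2)[OF a A'(1)]] by simp
    qed
  qed
  then show ?thesis unfolding Psi_def PB_def by auto
qed

lemma Phi_Psi:
  assumes a: "a \<in> Orp P word_le" and ba: "b \<in> Aset P word_le a"
  shows "Phi b (Psi b a) = a"
proof (intro equalityI subsetI)
  fix A'' assume "A'' \<in> Phi b (Psi b a)"
  then obtain B A' where BA: "B \<in> b" "A' \<in> a" "A' \<subseteq> B" "A'' = merge B (Jset A')"
    by (auto simp: Phi_def Psi_def)
  have "A' = merge B (Jset A')" by (rule K_lemma[OF a ba BA(2) BA(1) BA(3)])
  then show "A'' \<in> a" using BA by simp
next
  fix A' assume A': "A' \<in> a"
  have ref: "refines a b" using ba by (auto simp: Aset_def)
  then obtain B where B: "B \<in> b" "A' \<subseteq> B" using A' by (auto simp: refines_def)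
  then have "A' = merge B (Jset A')" using K_lemma[OF a ba A'] by simp
  then show "A' \<in> Phi b (Psi b a)" unfolding Phi_def Psi_def using A' B by auto
qed

lemma merge_ne:
  assumes "A \<subseteq> Jset B" "A \<noteq> {}"
  shows "merge B A \<noteq> {}"
  using assms by (auto simp: merge_def Jset_def)

lemma Psi_Phi:
  assumes b: "b \<in> Orp P word_le" and Ch: "Ch \<in> PiE b PB"
  shows "Psi b (Phi b Ch) = Ch"
proof
  fix B show "Psi b (Phi b Ch) B = Ch B"
  proof (cases "B \<in> b")
    case False
    then show ?thesis using PiE_arb[OF Ch False] by (simp add: Psi_def)
  next
    case True
    have ChB: "partition_on (Jset B') (Ch B')" if "B' \<in> b" for B'
      using PiE_mem[OF Ch that] by (simp add: PB_def)
    have "Jset ` {A''\<in>Phi b Ch. A'' \<subseteq> B} = Ch B"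
    proof (intro equalityI subsetI)
      fix A assume "A \<in> Jset ` {A''\<in>Phi b Ch. A'' \<subseteq> B}"
      then obtain B' A0 where BA: "B' \<in> b" "A0 \<in> Ch B'" "merge B' A0 \<subseteq> B" "A = Jset (merge B' A0)"
        by (auto simp: Phi_def)
      have sub: "A0 \<subseteq> Jset B'" "A0 \<noteq> {}" using ChB[OF BA(1)] BA(2) by (auto simp: partition_on_def)
      obtain x where "x \<in> merge B' A0" using merge_ne[OF sub] by blast
      then have "B' = B" using Orp_uniq[OF b BA(1) True, of x] BA(3) by (auto simp: merge_def)
      then show "A \<in> Ch B" using BA Jset_merge[OF sub(1)] by simp
    next
      fix A assume A: "A \<in> Ch B"
      have sub: "A \<subseteq> Jset B" using ChB[OF True] A by (auto simp: partition_on_def)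
      have "merge B A \<in> Phi b Ch" "merge B A \<subseteq> B" unfolding Phi_def using True A by (auto simp: merge_def)
      then show "A \<in> Jset ` {A''\<in>Phi b Ch. A'' \<subseteq> B}" using Jset_merge[OF sub] by force
    qed
    then show ?thesis using True by (simp add: Psi_def)
  qed
qed

lemma gen_Phi:
  assumes b: "b \<in> Orp P word_le" and Ch: "Ch \<in> PiE b PB"
  shows "gen_cumulant M X T ts (Phi b Ch) = (\<Prod>B\<in>b. \<Prod>A\<in>Ch B. cumE (EB B) A)"
proof -
  have ChB: "partition_on (Jset B) (Ch B)" if "B \<in> b" for B
    using PiE_mem[OF Ch that] by (simp add: PB_def)
  have finCh: "finite (Ch B)" if "B \<in> b" for B
    using finite_elements[OF finite_Jset ChB[OF that]] .
  have sub: "A \<subseteq> Jset B" "A \<noteq> {}" if "B \<in> b" "A \<in> Ch B" for A B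
    using ChB[OF that(1)] that(2) by (auto simp: partition_on_def)
  let ?jc = "\<lambda>A. joint_cumulant M (Jset A) (\<lambda>j \<omega>. X \<omega> (0, T) (subword ts A j))"
  have "gen_cumulant M X T ts (Phi b Ch) = (\<Prod>A\<in>(\<Union>B\<in>b. merge B ` Ch B). ?jc A)"
    by (simp add: gen_cumulant_alt Phi_def)
  also have "\<dots> = (\<Prod>B\<in>b. \<Prod>A\<in>merge B ` Ch B. ?jc A)"
  proof (rule prod.UNION_disjoint)
    show "finite b" using Orp_finite[OF b] .
    show "\<forall>B\<in>b. finite (merge B ` Ch B)" using finCh by simp
    show "\<forall>B\<in>b. \<forall>B'\<in>b. B \<noteq> B' \<longrightarrow> merge B ` Ch B \<inter> merge B' ` Ch B' = {}"
    proof (intro ballI impI)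
      fix B B' assume B: "B \<in> b" and B': "B' \<in> b" and ne: "B \<noteq> B'"
      show "merge B ` Ch B \<inter> merge B' ` Ch B' = {}"
      proof (rule ccontr)
        assume "merge B ` Ch B \<inter> merge B' ` Ch B' \<noteq> {}"
        then obtain A A2 where A: "A \<in> Ch B" "A2 \<in> Ch B'" "merge B A = merge B' A2" by blast
        obtain x where "x \<in> merge B A" using merge_ne[OF sub[OF B A(1)]] by blast
        then have "x \<in> B" "x \<in> B'" using A(3) by (auto simp: merge_def)
        then show False using Orp_uniq[OF b B B'] ne by blast
      qed
    qed
  qed
  also have "\<dots> = (\<Prod>B\<in>b. \<Prod>A\<in>Ch B. cumE (EB B) A)"
  proof (rule prod.cong[OF refl])
    fix B assume B: "B \<in> b"
    have inj: "inj_on (merge B) (Ch B)"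
    proof (rule inj_onI)
      fix A1 A2 assume h: "A1 \<in> Ch B" "A2 \<in> Ch B" "merge B A1 = merge B A2"
      have "A1 = Jset (merge B A1)" using Jset_merge[OF sub(1)[OF B h(1)]] by simp
      also have "\<dots> = Jset (merge B A2)" using h(3) by simp
      also have "\<dots> = A2" using Jset_merge[OF sub(1)[OF B h(2)]] by simp
      finally show "A1 = A2" .
    qed
    have "(\<Prod>A\<in>merge B ` Ch B. ?jc A) = (\<Prod>A\<in>Ch B. ?jc (merge B A))"
      by (rule prod.reindex[OF inj, unfolded comp_def])
    also have "\<dots> = (\<Prod>A\<in>Ch B. cumE (EB B) A)"
      by (rule prod.cong[OF refl]) (rule jc_merge[OF sub(1)[OF B]])
    finally show "(\<Prod>A\<in>merge B ` Ch B. ?jc A) = (\<Prod>A\<in>Ch B. cumE (EB B) A)" .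
  qed
  finally show ?thesis .
qed

lemma sum_Aset:
  assumes b: "b \<in> Orp P word_le"
  shows "(\<Sum>a\<in>{a\<in>Orp P word_le. b \<in> Aset P word_le a}. gen_cumulant M X T ts a) = (\<Prod>B\<in>b. mom B)"
proof -
  have "(\<Prod>B\<in>b. mom B) = (\<Prod>B\<in>b. \<Sum>\<pi>\<in>PB B. \<Prod>A\<in>\<pi>. cumE (EB B) A)"
  proof (rule prod.cong[OF refl])
    fix B assume B: "B \<in> b"
    show "mom B = (\<Sum>\<pi>\<in>PB B. \<Prod>A\<in>\<pi>. cumE (EB B) A)"
      unfolding PB_def by (rule mom_INV[OF Orp_blocks(1,2)[OF b B]])
  qed
  also have "\<dots> = (\<Sum>Ch\<in>PiE b PB. \<Prod>B\<in>b. \<Prod>A\<in>Ch B. cumE (EB B) A)"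
  proof (rule prod_sum_PiE)
    show "finite b" by (rule Orp_finite[OF b])
    show "finite (PB B)" for B unfolding PB_def by (rule finitely_many_partition_on[OF finite_Jset])
  qed
  also have "\<dots> = (\<Sum>Ch\<in>PiE b PB. gen_cumulant M X T ts (Phi b Ch))"
    using gen_Phi[OF b] by simp
  also have "\<dots> = (\<Sum>a\<in>{a\<in>Orp P word_le. b \<in> Aset P word_le a}. gen_cumulant M X T ts a)"
  proof (rule sum.reindex_bij_witness[where j = "Phi b" and i = "Psi b"])
    fix Ch assume Ch: "Ch \<in> PiE b PB"
    show "Psi b (Phi b Ch) = Ch" using Psi_Phi[OF b Ch] .
    show "Phi b Ch \<in> {a\<in>Orp P word_le. b \<in> Aset P word_le a}"
      using Phi_Aset[OF b Ch] Phi_in_Orp[OF b Ch] by simp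
  next
    fix a assume "a \<in> {a\<in>Orp P word_le. b \<in> Aset P word_le a}"
    then have a: "a \<in> Orp P word_le" "b \<in> Aset P word_le a" by auto
    show "Phi b (Psi b a) = a" using Phi_Psi[OF a] .
    show "Psi b a \<in> PiE b PB" using Psi_PiE[OF a] .
  qed simp
  finally show ?thesis by simp
qed

end

context setting
begin

lemma main_eq:
  "tpair (sig_cumulant M X T) (foldr tshuffle (map ew ts) (ew [])) =
   (\<Sum>a\<in>Orp P word_le. dcoef P word_le a * gen_cumulant M X T ts a)"
proof -
  define Os where "Os = Orp P word_le"
  define w where "w b = (-1) ^ (card b - 1) * real (part_fact P word_le b) / real (card b)" for b
  define G where "G a = gen_cumulant M X T ts a" for a
  have AsubO: "Aset P word_le a = {b \<in> Os. b \<in> Aset P word_le a}" for a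
    unfolding Aset_def Os_def by blast
  have fOs: "finite Os" unfolding Os_def by (rule finite_Orp)
  have "(\<Sum>a\<in>Os. dcoef P word_le a * G a) = (\<Sum>a\<in>Os. \<Sum>b\<in>{b \<in> Os. b \<in> Aset P word_le a}. w b * G a)"
  proof (rule sum.cong[OF refl])
    fix a
    have "dcoef P word_le a = (\<Sum>b\<in>{b \<in> Os. b \<in> Aset P word_le a}. w b)"
      unfolding dcoef_def w_def by (rule sum.cong[OF AsubO refl])
    then show "dcoef P word_le a * G a = (\<Sum>b\<in>{b \<in> Os. b \<in> Aset P word_le a}. w b * G a)"
      by (simp only: sum_distrib_right)
  qed
  also have "\<dots> = (\<Sum>b\<in>Os. \<Sum>a\<in>{a \<in> Os. b \<in> Aset P word_le a}. w b * G a)"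
    by (rule sum.swap_restrict[OF fOs fOs])
  also have "\<dots> = (\<Sum>b\<in>Os. w b * (\<Prod>B\<in>b. mom B))"
  proof (rule sum.cong[OF refl])
    fix b assume "b \<in> Os"
    then have "(\<Sum>a\<in>{a \<in> Os. b \<in> Aset P word_le a}. G a) = (\<Prod>B\<in>b. mom B)"
      unfolding Os_def G_def by (rule sum_Aset)
    then show "(\<Sum>a\<in>{a \<in> Os. b \<in> Aset P word_le a}. w b * G a) = w b * (\<Prod>B\<in>b. mom B)"
      by (simp add: sum_distrib_left[symmetric])
  qed
  also have "\<dots> = tpair (sig_cumulant M X T) (foldr tshuffle (map ew ts) (ew []))"
    unfolding LHS2 Os_def w_def by (rule RHS_to_LHS)
  finally show ?thesis unfolding Os_def G_def by simp
qed

end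

theorem corollary3p4:
  fixes M :: "'w measure" and X :: "'w \<Rightarrow> real \<times> real \<Rightarrow> nat list \<Rightarrow> real"
    and d :: nat and p T :: real and ts :: "nat list list"
  assumes "prob_space M"
    and "1 \<le> p" and "0 \<le> T"
    and "\<forall>\<omega>\<in>space M. X \<omega> \<in> wg_rough_paths d p T"
    and "\<forall>\<sigma>. is_word d \<sigma> \<longrightarrow> integrable M (\<lambda>\<omega>. X \<omega> (0, T) \<sigma>)"
    and "length ts \<ge> 1"
    and "\<forall>\<tau>\<in>set ts. \<tau> \<noteq> [] \<and> is_word d \<tau>"
  shows "tpair (sig_cumulant M X T) (foldr tshuffle (map ew ts) (ew [])) =
         (\<Sum>a\<in>Orp (word_poset ts) word_le.
            dcoef (word_poset ts) word_le a * gen_cumulant M X T ts a)"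
proof -
  have "ts \<noteq> []" using assms(6) by auto
  interpret setting M X d p T ts
    using assms(1,3,4,5,7) \<open>ts \<noteq> []\<close> by (rule setting.intro)
  show ?thesis by (rule main_eq)
qed

end
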